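(* Assume the following setting. For each $n$, $X\in\mathbb{R}^{n\times e}$ is deterministic with rows $x_i$; $\Gamma\in\mathbb{R}^{e\times p}$, $\sigma^2>0$, $\sigma_z^2>0$, $e,p$ are fixed; $\lambda\ge0$ and $\beta_0\in\mathbb{R}^e$ depend on $n$. Let $y=X\beta_0+\epsilon$, $Z=X\Gamma+E$, with entries of $E$ i.i.d. $N(0,\sigma_z^2)$, entries of $\epsilon$ i.i.d. $N(0,\sigma^2)$, $E,\epsilon$ independent. Assume as $n\to\infty$: $\lambda/n\to\kappa\ge0$; $\sqrt n\beta_0\to\alpha_0$; $\frac1nX^TX\to\Sigma$ positive definite; $\frac1n\mathbf{1}^TX\to\Theta\in\mathbb{R}^{1\times e}$; $\max_i\|x_i\|=o(n^{1/3})$. Let $\tilde Z=[\mathbf{1},Z]$ with rows $\tilde Z_i$, and let $\tilde Z_{(i)}$, $y_{(i)}$ denote $\tilde Z$, $y$ with the $i$-th row (entry) removed. Define the pre-validated vector $\tilde y\in\mathbb{R}^n$ by $\tilde y_i=\tilde Z_i(\tilde Z_{(i)}^T\tilde Z_{(i)}+\lambda I)^{-1}\tilde Z_{(i)}^Ty_{(i)}$, and let $$y':=\tilde Z(\tilde Z^T\tilde Z+\lambda I)^{-1}\tilde Z^TX\beta_0+\tilde Z(\tilde Z^T\tilde Z+\lambda I)^{-1}\tilde Z^T\epsilon.$$ Then as $n\to\infty$, $\|\tilde y-y'\|=o_P(1)$, $\|\tilde y\|=O_P(1)$ and $\|y'\|=O_P(1)$.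
   Context: $\|\cdot\|$ is the Euclidean norm; $I$ is the $(p+1)\times(p+1)$ identity. *)

theory Defs
  imports "HOL-Probability.Probability"
begin

definition outerp :: "real^'a \<Rightarrow> real^'a^'a" where
  "outerp v = (\<chi> a b. v $ a * v $ b)"

definition posdef :: "real^'a^'a \<Rightarrow> bool" where
  "posdef A \<longleftrightarrow> transpose A = A \<and> (\<forall>v. v \<noteq> 0 \<longrightarrow> v \<bullet> (A *v v) > 0)"

definition outer_prob :: "'w measure \<Rightarrow> 'w set \<Rightarrow> real" where
  "outer_prob M S = Inf {measure M A | A. A \<in> sets M \<and> S \<inter> space M \<subseteq> A}"

definition small_oP :: "'w measure \<Rightarrow> (nat \<Rightarrow> 'w \<Rightarrow> real) \<Rightarrow> bool" where
  "small_oP M Y \<longleftrightarrow> (\<forall>\<delta>>0. (\<lambda>n. outer_prob M {\<omega>\<in>space M. \<bar>Y n \<omega>\<bar> > \<delta>}) \<longlonglongrightarrow> 0)"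

definition big_OP :: "'w measure \<Rightarrow> (nat \<Rightarrow> 'w \<Rightarrow> real) \<Rightarrow> bool" where
  "big_OP M Y \<longleftrightarrow> (\<forall>\<eta>>0. \<exists>K N. \<forall>n\<ge>N. outer_prob M {\<omega>\<in>space M. \<bar>Y n \<omega>\<bar> > K} < \<eta>)"

text \<open>Augmented row [1, z] of Z-tilde; the intercept column is indexed by None.\<close>
definition aug :: "real^'p \<Rightarrow> real^('p option)" where
  "aug z = (\<chi> k. case k of None \<Rightarrow> 1 | Some j \<Rightarrow> z $ j)"

definition ridge_coef :: "real \<Rightarrow> (nat \<Rightarrow> real^'q) \<Rightarrow> (nat \<Rightarrow> real) \<Rightarrow> nat set \<Rightarrow> real^'q" where
  "ridge_coef lam Zt r S =
     matrix_inv ((\<Sum>j\<in>S. outerp (Zt j)) + lam *\<^sub>R mat 1) *v (\<Sum>j\<in>S. r j *\<^sub>R Zt j)"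

end

theory Submission
  imports Defs
begin

lemma outerp_mulv: "outerp z *v v = (z \<bullet> v) *\<^sub>R z"
  by (simp add: outerp_def matrix_vector_mult_def inner_vec_def vec_eq_iff sum_distrib_left
      mult.commute mult.left_commute)

lemma sum_mat_mulv: "(\<Sum>j\<in>S. (A j :: real^'n^'m)) *v v = (\<Sum>j\<in>S. A j *v v)"
  by (induction S rule: infinite_finite_induct) (auto simp: matrix_vector_mult_add_rdistrib)

lemma scaleR_mat1_mulv: "((c::real) *\<^sub>R mat 1) *v (v::real^'n) = c *\<^sub>R v"
  by (metis matrix_vector_mul_lid scaleR_matrix_vector_assoc)

definition rmat :: "real \<Rightarrow> (nat \<Rightarrow> real^'q) \<Rightarrow> nat set \<Rightarrow> real^'q^'q" where
  "rmat lam z S = (\<Sum>j\<in>S. outerp (z j)) + lam *\<^sub>R mat 1"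

definition rhs :: "(nat \<Rightarrow> real^'q) \<Rightarrow> (nat \<Rightarrow> real) \<Rightarrow> nat set \<Rightarrow> real^'q" where
  "rhs z r S = (\<Sum>j\<in>S. r j *\<^sub>R z j)"

lemma ridge_coef_alt: "ridge_coef lam z r S = matrix_inv (rmat lam z S) *v rhs z r S"
  by (simp add: ridge_coef_def rmat_def rhs_def)

lemma rmat_mulv: "rmat lam z S *v v = (\<Sum>j\<in>S. (z j \<bullet> v) *\<^sub>R z j) + lam *\<^sub>R v"
  by (simp add: rmat_def matrix_vector_mult_add_rdistrib sum_mat_mulv outerp_mulv scaleR_mat1_mulv)

lemma rmat_quad: "v \<bullet> (rmat lam z S *v v) = (\<Sum>j\<in>S. (v \<bullet> z j)\<^sup>2) + lam * (norm v)\<^sup>2"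
proof -
  have "v \<bullet> (rmat lam z S *v v) = (\<Sum>j\<in>S. (z j \<bullet> v) * (v \<bullet> z j)) + lam * (v \<bullet> v)"
    by (simp add: rmat_mulv inner_add_right inner_sum_right)
  also have "(\<Sum>j\<in>S. (z j \<bullet> v) * (v \<bullet> z j)) = (\<Sum>j\<in>S. (v \<bullet> z j)\<^sup>2)"
    by (simp add: inner_commute power2_eq_square)
  also have "v \<bullet> v = (norm v)\<^sup>2" by (simp add: power2_norm_eq_inner)
  finally show ?thesis .
qed

lemma pd_invertible:
  fixes A :: "real^'n^'n"
  assumes d: "d > 0" and pd: "\<And>v. d * (norm v)\<^sup>2 \<le> v \<bullet> (A *v v)"
  shows "invertible A"
proof -
  have "\<forall>x. A *v x = 0 \<longrightarrow> x = 0"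
  proof (intro allI impI)
    fix x assume "A *v x = 0"
    with pd[of x] have "d * (norm x)\<^sup>2 \<le> 0" by simp
    with d have "(norm x)\<^sup>2 \<le> 0" by (simp add: mult_le_0_iff)
    then show "x = 0" by simp
  qed
  then show ?thesis
    by (simp add: invertible_left_inverse matrix_left_invertible_ker)
qed

lemma pd_solve:
  fixes A :: "real^'n^'n"
  assumes d: "d > 0" and pd: "\<And>v. d * (norm v)\<^sup>2 \<le> v \<bullet> (A *v v)"
  shows "A *v (matrix_inv A *v b) = b"
proof -
  have "invertible A" by (rule pd_invertible[OF d pd])
  then have "A ** matrix_inv A = mat 1"
    unfolding invertible_def matrix_inv_def by (rule someI_ex[THEN conjunct1])
  then show ?thesis by (simp add: matrix_vector_mul_assoc)
qed

lemma pd_unique: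
  fixes A :: "real^'n^'n"
  assumes d: "d > 0" and pd: "\<And>v. d * (norm v)\<^sup>2 \<le> v \<bullet> (A *v v)"
    and eq: "A *v x = A *v y"
  shows "x = y"
proof -
  have "A *v (x - y) = 0" using eq by (simp add: matrix_vector_mult_diff_distrib)
  with pd[of "x - y"] have "d * (norm (x - y))\<^sup>2 \<le> 0" by simp
  with d have "(norm (x - y))\<^sup>2 \<le> 0" by (simp add: mult_le_0_iff)
  then show ?thesis by simp
qed

lemma pd_norm_bound:
  fixes A :: "real^'n^'n"
  assumes d: "d > 0" and pd: "\<And>v. d * (norm v)\<^sup>2 \<le> v \<bullet> (A *v v)"
    and eq: "A *v x = b"
  shows "norm x \<le> norm b / d" and "x \<bullet> b \<le> (norm b)\<^sup>2 / d"
proof -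
  have "d * (norm x)\<^sup>2 \<le> x \<bullet> b" using pd[of x] eq by simp
  also have "\<dots> \<le> norm x * norm b" by (rule norm_cauchy_schwarz)
  finally have 1: "d * (norm x)\<^sup>2 \<le> norm x * norm b" .
  show 2: "norm x \<le> norm b / d"
  proof (cases "norm x = 0")
    case True then show ?thesis using d by simp
  next
    case False
    then have "norm x > 0" by simp
    from 1 have "d * norm x * norm x \<le> norm b * norm x" by (simp add: power2_eq_square algebra_simps)
    then have "d * norm x \<le> norm b" using \<open>norm x > 0\<close> by simp
    then show ?thesis using d by (simp add: field_simps)
  qed
  have "x \<bullet> b \<le> norm x * norm b" by (rule norm_cauchy_schwarz)
  also have "\<dots> \<le> norm b / d * norm b" using mult_right_mono[OF 2 norm_ge_zero] .
  finally show "x \<bullet> b \<le> (norm b)\<^sup>2 / d" by (simp add: power2_eq_square)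
qed

lemma ridge_fit_bound:
  fixes z :: "nat \<Rightarrow> real^'q"
  assumes fin: "finite S" and lam: "lam \<ge> 0" and d: "d > 0"
    and lb: "\<And>v. d * (norm v)\<^sup>2 \<le> (\<Sum>j\<in>S. (v \<bullet> z j)\<^sup>2)"
  shows "(\<Sum>i\<in>S. (z i \<bullet> ridge_coef lam z y S)\<^sup>2) \<le> (norm (rhs z y S))\<^sup>2 / d"
proof -
  let ?A = "rmat lam z S" and ?b = "rhs z y S"
  have pd: "d * (norm v)\<^sup>2 \<le> v \<bullet> (?A *v v)" for v
  proof -
    have "0 \<le> lam * (norm v)\<^sup>2" using lam by simp
    then show ?thesis using lb[of v] by (simp add: rmat_quad)
  qed
  define \<beta> where "\<beta> = ridge_coef lam z y S"
  have sol: "?A *v \<beta> = ?b" unfolding \<beta>_def ridge_coef_alt by (rule pd_solve[OF d pd])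
  have "(\<Sum>i\<in>S. (z i \<bullet> \<beta>)\<^sup>2) \<le> \<beta> \<bullet> (?A *v \<beta>)"
    using lam by (simp add: rmat_quad inner_commute)
  also have "\<dots> = \<beta> \<bullet> ?b" using sol by simp
  also have "\<dots> \<le> (norm ?b)\<^sup>2 / d" by (rule pd_norm_bound(2)[OF d pd sol])
  finally show ?thesis unfolding \<beta>_def .
qed

lemma ridge_loo_bound:
  fixes z :: "nat \<Rightarrow> real^'q"
  assumes fin: "finite S" and lam: "lam \<ge> 0" and d: "d > 0"
    and lb: "\<And>v. d * (norm v)\<^sup>2 \<le> (\<Sum>j\<in>S. (v \<bullet> z j)\<^sup>2)"
    and i: "i \<in> S" and zi: "(norm (z i))\<^sup>2 \<le> d / 2"
  shows "\<bar>z i \<bullet> ridge_coef lam z y (S - {i}) - z i \<bullet> ridge_coef lam z y S\<bar>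
         \<le> 2 * (norm (z i))\<^sup>2 / d * \<bar>z i \<bullet> ridge_coef lam z y S - y i\<bar>"
proof -
  let ?A = "rmat lam z S" and ?b = "rhs z y S"
  let ?Ai = "rmat lam z (S - {i})" and ?bi = "rhs z y (S - {i})"
  have pd: "d * (norm v)\<^sup>2 \<le> v \<bullet> (?A *v v)" for v
  proof -
    have "0 \<le> lam * (norm v)\<^sup>2" using lam by simp
    then show ?thesis using lb[of v] by (simp add: rmat_quad)
  qed
  have d2: "d / 2 > 0" using d by simp
  have pdi: "d / 2 * (norm v)\<^sup>2 \<le> v \<bullet> (?Ai *v v)" for v
  proof -
    have s: "(\<Sum>j\<in>S. (v \<bullet> z j)\<^sup>2) = (v \<bullet> z i)\<^sup>2 + (\<Sum>j\<in>S - {i}. (v \<bullet> z j)\<^sup>2)"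
      using fin i by (simp add: sum.remove)
    have "(v \<bullet> z i)\<^sup>2 \<le> (norm v * norm (z i))\<^sup>2"
      using Cauchy_Schwarz_ineq2[of v "z i"] abs_le_square_iff by (metis abs_ge_zero abs_of_nonneg norm_ge_zero zero_le_mult_iff) 
    also have "\<dots> = (norm v)\<^sup>2 * (norm (z i))\<^sup>2" by (simp add: power_mult_distrib)
    also have "\<dots> \<le> (norm v)\<^sup>2 * (d / 2)" using mult_left_mono[OF zi zero_le_power2] .
    finally have "(v \<bullet> z i)\<^sup>2 \<le> (norm v)\<^sup>2 * (d / 2)" .
    then have "d / 2 * (norm v)\<^sup>2 \<le> (\<Sum>j\<in>S - {i}. (v \<bullet> z j)\<^sup>2)"
      using lb[of v] s by (simp add: algebra_simps)
    moreover have "0 \<le> lam * (norm v)\<^sup>2" using lam by simp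
    ultimately show ?thesis by (simp add: rmat_quad)
  qed
  define \<beta> where "\<beta> = ridge_coef lam z y S"
  define \<beta>i where "\<beta>i = ridge_coef lam z y (S - {i})"
  define w where "w = matrix_inv ?Ai *v z i"
  have sol: "?A *v \<beta> = ?b" unfolding \<beta>_def ridge_coef_alt by (rule pd_solve[OF d pd])
  have soli: "?Ai *v \<beta>i = ?bi" unfolding \<beta>i_def ridge_coef_alt by (rule pd_solve[OF d2 pdi])
  have solw: "?Ai *v w = z i" unfolding w_def by (rule pd_solve[OF d2 pdi])
  have Aeq: "?A = ?Ai + outerp (z i)"
    unfolding rmat_def by (simp add: sum.remove[OF fin i] add_ac)
  have beq: "?b = ?bi + y i *\<^sub>R z i"
    unfolding rhs_def by (simp add: sum.remove[OF fin i] add_ac)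
  define yh where "yh = z i \<bullet> \<beta>"
  have "?A *v \<beta> = ?Ai *v \<beta> + yh *\<^sub>R z i"
    unfolding Aeq by (simp add: matrix_vector_mult_add_rdistrib outerp_mulv yh_def)
  then have Aib: "?Ai *v \<beta> = ?b - yh *\<^sub>R z i" using sol by (metis add_diff_cancel_right')
  have "?Ai *v (\<beta> + (yh - y i) *\<^sub>R w) = ?Ai *v \<beta> + (yh - y i) *\<^sub>R z i"
    by (simp add: matrix_vector_right_distrib matrix_vector_mult_scaleR solw)
  also have "\<dots> = ?bi" unfolding Aib beq by (simp add: scaleR_diff_left)
  finally have "?Ai *v (\<beta> + (yh - y i) *\<^sub>R w) = ?bi" .
  then have "\<beta>i = \<beta> + (yh - y i) *\<^sub>R w"
    using soli by (auto intro: pd_unique[OF d2 pdi, of \<beta>i])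
  then have diff: "z i \<bullet> \<beta>i - z i \<bullet> \<beta> = (yh - y i) * (z i \<bullet> w)"
    by (simp add: inner_add_right)
  have "norm w \<le> norm (z i) / (d / 2)" by (rule pd_norm_bound(1)[OF d2 pdi solw])
  then have "\<bar>z i \<bullet> w\<bar> \<le> norm (z i) * (norm (z i) / (d / 2))"
    using Cauchy_Schwarz_ineq2[of "z i" w] by (meson mult_left_mono norm_ge_zero order_trans)
  also have "\<dots> = 2 * (norm (z i))\<^sup>2 / d" by (simp add: power2_eq_square)
  finally have zw: "\<bar>z i \<bullet> w\<bar> \<le> 2 * (norm (z i))\<^sup>2 / d" .
  have "\<bar>z i \<bullet> \<beta>i - z i \<bullet> \<beta>\<bar> = \<bar>yh - y i\<bar> * \<bar>z i \<bullet> w\<bar>" by (simp add: diff abs_mult)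
  also have "\<dots> \<le> \<bar>yh - y i\<bar> * (2 * (norm (z i))\<^sup>2 / d)" using mult_left_mono[OF zw abs_ge_zero] .
  finally show ?thesis unfolding \<beta>_def \<beta>i_def yh_def by (simp add: mult.commute)
qed

lemma sum_option: "(\<Sum>x\<in>(UNIV::'p::finite option set). f x) = f None + (\<Sum>k\<in>UNIV. f (Some k))"
  by (simp add: UNIV_option_conv sum.reindex)

definition tl_vec :: "real^('p::finite option) \<Rightarrow> real^'p" where
  "tl_vec v = (\<chi> k. v $ Some k)"

lemma inner_aug: "v \<bullet> aug u = v $ None + tl_vec v \<bullet> u"
  by (simp add: inner_vec_def aug_def tl_vec_def sum_option)

lemma norm2_vec: "(norm (x::real^'n))\<^sup>2 = (\<Sum>k\<in>UNIV. (x $ k)\<^sup>2)"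
  unfolding power2_norm_eq_inner by (simp add: inner_vec_def power2_eq_square)

lemma norm2_opt: "(norm v)\<^sup>2 = (v $ None)\<^sup>2 + (norm (tl_vec v))\<^sup>2"
  by (simp add: norm2_vec sum_option tl_vec_def)

lemma norm2_aug: "(norm (aug u))\<^sup>2 = 1 + (norm u)\<^sup>2"
  by (simp add: norm2_vec sum_option aug_def)

lemma quad_bound:
  fixes A :: "real^'n^'n"
  shows "\<bar>w \<bullet> (A *v w)\<bar> \<le> (norm w)\<^sup>2 * (\<Sum>k\<in>UNIV. \<Sum>l\<in>UNIV. \<bar>A $ k $ l\<bar>)"
proof -
  have eq: "w \<bullet> (A *v w) = (\<Sum>k\<in>UNIV. \<Sum>l\<in>UNIV. w $ k * A $ k $ l * w $ l)"
    by (simp add: inner_vec_def matrix_vector_mult_def sum_distrib_left mult.assoc)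
  have "\<bar>w \<bullet> (A *v w)\<bar> \<le> (\<Sum>k\<in>UNIV. \<Sum>l\<in>UNIV. \<bar>w $ k * A $ k $ l * w $ l\<bar>)"
    unfolding eq by (rule order_trans[OF sum_abs sum_mono[OF sum_abs]])
  also have "\<dots> \<le> (\<Sum>k\<in>UNIV. \<Sum>l\<in>UNIV. (norm w)\<^sup>2 * \<bar>A $ k $ l\<bar>)"
  proof (intro sum_mono)
    fix k l
    have "\<bar>w $ k\<bar> * \<bar>w $ l\<bar> \<le> norm w * norm w"
      by (intro mult_mono component_le_norm_cart) auto
    then have "\<bar>w $ k\<bar> * \<bar>w $ l\<bar> * \<bar>A $ k $ l\<bar> \<le> (norm w)\<^sup>2 * \<bar>A $ k $ l\<bar>"
      by (simp add: power2_eq_square mult_right_mono)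
    then show "\<bar>w $ k * A $ k $ l * w $ l\<bar> \<le> (norm w)\<^sup>2 * \<bar>A $ k $ l\<bar>"
      by (simp add: abs_mult mult_ac)
  qed
  also have "\<dots> = (norm w)\<^sup>2 * (\<Sum>k\<in>UNIV. \<Sum>l\<in>UNIV. \<bar>A $ k $ l\<bar>)"
    by (simp add: sum_distrib_left)
  finally show ?thesis .
qed

definition outer2 :: "real^'n \<Rightarrow> real^'n \<Rightarrow> real^'n^'n" where
  "outer2 x y = (\<chi> k l. x $ k * y $ l)"

lemma outer2_mulv: "outer2 x y *v w = (y \<bullet> w) *\<^sub>R x"
  by (simp add: outer2_def matrix_vector_mult_def inner_vec_def vec_eq_iff sum_distrib_left mult_ac)

lemma sq_diff_le': "((x::real) - y)\<^sup>2 \<le> 2 * x\<^sup>2 + 2 * y\<^sup>2"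
proof -
  have "0 \<le> (x + y)\<^sup>2" by simp
  then show ?thesis unfolding power2_diff power2_sum by linarith
qed

lemma sq_sum_le': "((x::real) + y)\<^sup>2 \<le> 2 * x\<^sup>2 + 2 * y\<^sup>2"
proof -
  have "0 \<le> (x - y)\<^sup>2" by simp
  then show ?thesis unfolding power2_diff power2_sum by linarith
qed

lemma c0_bound:
  fixes a t nw s2 Mb :: real
  assumes t: "\<bar>t\<bar> \<le> Mb * nw" and nw: "0 \<le> nw" and s2: "s2 > 0" and Mb: "Mb \<ge> 0"
  shows "min (s2 / (4 * (Mb\<^sup>2 + s2))) (s2 / 2) * (a\<^sup>2 + nw\<^sup>2) \<le> (a + t)\<^sup>2 + s2 * nw\<^sup>2"
proof -
  define L where "L = s2 / (2 * (Mb\<^sup>2 + s2))"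
  have pos: "Mb\<^sup>2 + s2 > 0" using s2 by (simp add: add_nonneg_pos)
  have L0: "0 \<le> L" unfolding L_def using pos s2 by simp
  have L1: "L \<le> 1" unfolding L_def using pos s2 by (simp add: field_simps)
  have LM: "L * Mb\<^sup>2 \<le> s2 / 2" unfolding L_def using pos s2 by (simp add: field_simps)
  have a2: "a\<^sup>2 \<le> 2 * (a + t)\<^sup>2 + 2 * t\<^sup>2" using sq_diff_le'[of "a + t" t] by simp
  have t2: "t\<^sup>2 \<le> Mb\<^sup>2 * nw\<^sup>2"
  proof -
    have "\<bar>t\<bar>\<^sup>2 \<le> (Mb * nw)\<^sup>2" by (rule power_mono[OF t]) simp
    then show ?thesis by (simp add: power_mult_distrib)
  qed
  have f1: "L * a\<^sup>2 \<le> 2 * (L * (a + t)\<^sup>2) + 2 * (L * t\<^sup>2)"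
    using mult_left_mono[OF a2 L0] by (simp add: distrib_left mult.left_commute)
  have f2: "L * t\<^sup>2 \<le> L * (Mb\<^sup>2 * nw\<^sup>2)" by (rule mult_left_mono[OF t2 L0])
  have f3: "2 * (L * (Mb\<^sup>2 * nw\<^sup>2)) \<le> s2 * nw\<^sup>2"
    using mult_right_mono[OF LM, of "nw\<^sup>2"] by (simp add: field_simps)
  have f4: "L * (a + t)\<^sup>2 \<le> (a + t)\<^sup>2" using mult_right_mono[OF L1, of "(a+t)\<^sup>2"] by simp
  have main: "L * a\<^sup>2 \<le> 2 * (a + t)\<^sup>2 + s2 * nw\<^sup>2" using f1 f2 f3 f4 by linarith
  have m1: "min (s2 / (4 * (Mb\<^sup>2 + s2))) (s2 / 2) \<le> L / 2"
    by (rule order_trans[OF min.cobounded1]) (simp add: L_def)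
  have m2: "min (s2 / (4 * (Mb\<^sup>2 + s2))) (s2 / 2) \<le> s2 / 2" by (rule min.cobounded2)
  have g1: "min (s2 / (4 * (Mb\<^sup>2 + s2))) (s2 / 2) * a\<^sup>2 \<le> L * a\<^sup>2 / 2"
    using mult_right_mono[OF m1, of "a\<^sup>2"] by simp
  have g2: "min (s2 / (4 * (Mb\<^sup>2 + s2))) (s2 / 2) * nw\<^sup>2 \<le> s2 * nw\<^sup>2 / 2"
    using mult_right_mono[OF m2, of "nw\<^sup>2"] by simp
  have "min (s2 / (4 * (Mb\<^sup>2 + s2))) (s2 / 2) * (a\<^sup>2 + nw\<^sup>2)
     = min (s2 / (4 * (Mb\<^sup>2 + s2))) (s2 / 2) * a\<^sup>2 + min (s2 / (4 * (Mb\<^sup>2 + s2))) (s2 / 2) * nw\<^sup>2"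
    by (rule distrib_left)
  then show ?thesis using main g1 g2 by linarith
qed

lemma LB:
  fixes u e :: "nat \<Rightarrow> real^'p" and v :: "real^('p option)" and sq :: real
  assumes n: "n > 0"
  shows "real n * ((v $ None + tl_vec v \<bullet> ((1 / real n) *\<^sub>R (\<Sum>j<n. u j)))\<^sup>2 + sq * (norm (tl_vec v))\<^sup>2)
         - (norm v)\<^sup>2 * (2 * (\<Sum>l\<in>UNIV. \<bar>\<Sum>j<n. e j $ l\<bar>)
              + 2 * (\<Sum>k\<in>UNIV. \<Sum>l\<in>UNIV. \<bar>\<Sum>j<n. u j $ k * e j $ l\<bar>)
              + (\<Sum>k\<in>UNIV. \<Sum>l\<in>UNIV. \<bar>\<Sum>j<n. e j $ k * e j $ l - (if k = l then sq else 0)\<bar>))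
         \<le> (\<Sum>j<n. (v \<bullet> aug (u j + e j))\<^sup>2)"
proof -
  define a where "a = v $ None"
  define w where "w = tl_vec v"
  define t where "t j = a + w \<bullet> u j" for j
  define s where "s j = w \<bullet> e j" for j
  define Ue where "Ue = (\<Sum>j<n. e j)"
  define Vm where "Vm = (\<Sum>j<n. outer2 (u j) (e j))"
  define Dm where "Dm = (\<Sum>j<n. outerp (e j)) - (real n * sq) *\<^sub>R mat 1"
  define ub where "ub = (1 / real n) *\<^sub>R (\<Sum>j<n. u j)"
  have nv: "norm w \<le> norm v" and na: "\<bar>a\<bar> \<le> norm v"
  proof -
    have "(norm w)\<^sup>2 \<le> (norm v)\<^sup>2" using norm2_opt[of v] by (simp add: w_def)
    then show "norm w \<le> norm v" by (simp add: power_mono_iff)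
    show "\<bar>a\<bar> \<le> norm v" unfolding a_def by (rule component_le_norm_cart)
  qed
  have split: "v \<bullet> aug (u j + e j) = t j + s j" for j
    by (simp add: inner_aug t_def s_def a_def w_def inner_add_right)
  have expand: "(\<Sum>j<n. (v \<bullet> aug (u j + e j))\<^sup>2) = (\<Sum>j<n. (t j)\<^sup>2) + 2 * (\<Sum>j<n. t j * s j) + (\<Sum>j<n. (s j)\<^sup>2)"
    by (simp add: split power2_sum sum.distrib sum_distrib_left mult.assoc)
  have sumt: "(\<Sum>j<n. t j) = real n * (a + w \<bullet> ub)"
  proof -
    have "(\<Sum>j<n. t j) = real n * a + w \<bullet> (\<Sum>j<n. u j)"
      by (simp add: t_def sum.distrib inner_sum_right)
    also have "w \<bullet> (\<Sum>j<n. u j) = real n * (w \<bullet> ub)"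
      using n by (simp add: ub_def)
    finally show ?thesis by (simp add: distrib_left)
  qed
  have "(\<Sum>j<n. 1 * t j)\<^sup>2 \<le> (\<Sum>j<n. (1::real)\<^sup>2) * (\<Sum>j<n. (t j)\<^sup>2)"
    by (rule Cauchy_Schwarz_ineq_sum)
  then have "(real n * (a + w \<bullet> ub))\<^sup>2 \<le> real n * (\<Sum>j<n. (t j)\<^sup>2)" by (simp add: sumt)
  then have "real n * (real n * (a + w \<bullet> ub)\<^sup>2) \<le> real n * (\<Sum>j<n. (t j)\<^sup>2)"
    by (simp add: power_mult_distrib power2_eq_square mult_ac)
  then have A: "real n * (a + w \<bullet> ub)\<^sup>2 \<le> (\<Sum>j<n. (t j)\<^sup>2)" using n by simp
  have ts: "(\<Sum>j<n. t j * s j) = a * (w \<bullet> Ue) + w \<bullet> (Vm *v w)"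
  proof -
    have "(\<Sum>j<n. t j * s j) = (\<Sum>j<n. a * (w \<bullet> e j) + w \<bullet> (outer2 (u j) (e j) *v w))"
      by (intro sum.cong refl) (simp add: t_def s_def outer2_mulv distrib_right inner_commute)
    also have "\<dots> = a * (w \<bullet> Ue) + w \<bullet> (Vm *v w)"
      by (simp add: sum.distrib Ue_def Vm_def sum_mat_mulv inner_sum_right sum_distrib_left)
    finally show ?thesis .
  qed
  have Ue_c: "Ue $ l = (\<Sum>j<n. e j $ l)" for l by (simp add: Ue_def)
  have Vm_c: "Vm $ k $ l = (\<Sum>j<n. u j $ k * e j $ l)" for k l by (simp add: Vm_def outer2_def)
  have B1: "\<bar>a * (w \<bullet> Ue)\<bar> \<le> (norm v)\<^sup>2 * (\<Sum>l\<in>UNIV. \<bar>\<Sum>j<n. e j $ l\<bar>)"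
  proof -
    have "\<bar>a * (w \<bullet> Ue)\<bar> \<le> norm v * (norm w * norm Ue)"
      unfolding abs_mult by (intro mult_mono na Cauchy_Schwarz_ineq2) auto
    also have "\<dots> \<le> norm v * (norm v * (\<Sum>l\<in>UNIV. \<bar>Ue $ l\<bar>))"
      by (intro mult_left_mono mult_mono nv norm_le_l1_cart) auto
    finally show ?thesis by (simp add: Ue_c power2_eq_square mult.assoc)
  qed
  have B2: "\<bar>w \<bullet> (Vm *v w)\<bar> \<le> (norm v)\<^sup>2 * (\<Sum>k\<in>UNIV. \<Sum>l\<in>UNIV. \<bar>\<Sum>j<n. u j $ k * e j $ l\<bar>)"
  proof -
    have "\<bar>w \<bullet> (Vm *v w)\<bar> \<le> (norm w)\<^sup>2 * (\<Sum>k\<in>UNIV. \<Sum>l\<in>UNIV. \<bar>Vm $ k $ l\<bar>)" by (rule quad_bound)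
    also have "\<dots> \<le> (norm v)\<^sup>2 * (\<Sum>k\<in>UNIV. \<Sum>l\<in>UNIV. \<bar>Vm $ k $ l\<bar>)"
      by (intro mult_right_mono power_mono nv) (auto intro: sum_nonneg)
    finally show ?thesis by (simp add: Vm_c)
  qed
  have ss: "(\<Sum>j<n. (s j)\<^sup>2) = real n * sq * (norm w)\<^sup>2 + w \<bullet> (Dm *v w)"
  proof -
    have "w \<bullet> (Dm *v w) = (\<Sum>j<n. (s j)\<^sup>2) - real n * sq * (w \<bullet> w)"
      by (simp add: Dm_def matrix_vector_mult_diff_rdistrib sum_mat_mulv outerp_mulv scaleR_mat1_mulv
          inner_diff_right inner_sum_right s_def power2_eq_square inner_commute)
    then show ?thesis by (simp add: power2_norm_eq_inner)
  qed
  have Dm_c: "Dm $ k $ l = (\<Sum>j<n. e j $ k * e j $ l - (if k = l then sq else 0))" for k l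
    by (simp add: Dm_def outerp_def mat_def sum_subtractf)
  have C1: "\<bar>w \<bullet> (Dm *v w)\<bar> \<le> (norm v)\<^sup>2 * (\<Sum>k\<in>UNIV. \<Sum>l\<in>UNIV. \<bar>\<Sum>j<n. e j $ k * e j $ l - (if k = l then sq else 0)\<bar>)"
  proof -
    have "\<bar>w \<bullet> (Dm *v w)\<bar> \<le> (norm w)\<^sup>2 * (\<Sum>k\<in>UNIV. \<Sum>l\<in>UNIV. \<bar>Dm $ k $ l\<bar>)" by (rule quad_bound)
    also have "\<dots> \<le> (norm v)\<^sup>2 * (\<Sum>k\<in>UNIV. \<Sum>l\<in>UNIV. \<bar>Dm $ k $ l\<bar>)"
      by (intro mult_right_mono power_mono nv) (auto intro: sum_nonneg)
    finally show ?thesis by (simp add: Dm_c)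
  qed
  have "real n * ((a + w \<bullet> ub)\<^sup>2 + sq * (norm w)\<^sup>2)
         - (norm v)\<^sup>2 * (2 * (\<Sum>l\<in>UNIV. \<bar>\<Sum>j<n. e j $ l\<bar>)
              + 2 * (\<Sum>k\<in>UNIV. \<Sum>l\<in>UNIV. \<bar>\<Sum>j<n. u j $ k * e j $ l\<bar>)
              + (\<Sum>k\<in>UNIV. \<Sum>l\<in>UNIV. \<bar>\<Sum>j<n. e j $ k * e j $ l - (if k = l then sq else 0)\<bar>))
       \<le> (\<Sum>j<n. (t j)\<^sup>2) + 2 * (\<Sum>j<n. t j * s j) + (\<Sum>j<n. (s j)\<^sup>2)"
    unfolding ts ss using A B1 B2 C1 by (simp add: algebra_simps abs_le_iff)
  then show ?thesis unfolding expand a_def w_def ub_def .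
qed

lemma norm_sum_scale_sq:
  fixes z :: "nat \<Rightarrow> real^'q"
  shows "(norm (\<Sum>j<n. s j *\<^sub>R z j))\<^sup>2 \<le> (\<Sum>j<n. (s j)\<^sup>2) * (\<Sum>j<n. (norm (z j))\<^sup>2)"
proof -
  have "norm (\<Sum>j<n. s j *\<^sub>R z j) \<le> (\<Sum>j<n. \<bar>s j\<bar> * norm (z j))"
    by (rule order_trans[OF norm_sum]) simp
  then have "(norm (\<Sum>j<n. s j *\<^sub>R z j))\<^sup>2 \<le> (\<Sum>j<n. \<bar>s j\<bar> * norm (z j))\<^sup>2"
    by (rule power_mono) simp
  also have "\<dots> \<le> (\<Sum>j<n. \<bar>s j\<bar>\<^sup>2) * (\<Sum>j<n. (norm (z j))\<^sup>2)"
    by (rule Cauchy_Schwarz_ineq_sum)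
  finally show ?thesis by simp
qed

lemma FIN:
  fixes z :: "nat \<Rightarrow> real^'q" and s e :: "nat \<Rightarrow> real"
  assumes lam: "lam \<ge> 0" and c: "c > 0" and n: "n > 0"
    and lb: "\<And>v. c * real n * (norm v)\<^sup>2 \<le> (\<Sum>j<n. (v \<bullet> z j)\<^sup>2)"
    and zmax: "\<And>j. j < n \<Longrightarrow> (norm (z j))\<^sup>2 \<le> \<rho> * real n" and rho: "0 \<le> \<rho>" "\<rho> \<le> c / 2"
    and Ss: "(\<Sum>j<n. (s j)\<^sup>2) \<le> B" and Zs: "(\<Sum>j<n. (norm (z j))\<^sup>2) \<le> Kz * real n"
    and Ez: "(norm (\<Sum>j<n. e j *\<^sub>R z j))\<^sup>2 \<le> K * real n"
    and Ze: "(\<Sum>j<n. (norm (z j))\<^sup>2 * (e j)\<^sup>2) \<le> K * real n"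
  defines "yh \<equiv> \<lambda>i. z i \<bullet> ridge_coef lam z (\<lambda>j. s j + e j) {..<n}"
    and "yt \<equiv> \<lambda>i. z i \<bullet> ridge_coef lam z (\<lambda>j. s j + e j) ({..<n} - {i})"
  shows "(\<Sum>i<n. (yh i)\<^sup>2) \<le> (2 * B * Kz + 2 * K) / c"
    and "(\<Sum>i<n. (yt i - yh i)\<^sup>2)
         \<le> 2 * (2 * \<rho> / c)\<^sup>2 * ((2 * B * Kz + 2 * K) / c) + 4 * (2 * \<rho> / c)\<^sup>2 * B + 8 * (2 * \<rho> / c) * K / c"
proof -
  define d where "d = c * real n"
  have d: "d > 0" using c n by (simp add: d_def)
  have lb': "d * (norm v)\<^sup>2 \<le> (\<Sum>j<n. (v \<bullet> z j)\<^sup>2)" for v using lb by (simp add: d_def)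
  define y where "y j = s j + e j" for j
  have B0: "0 \<le> B" using Ss order_trans[OF sum_nonneg] by (metis zero_le_power2)
  have Kz0: "0 \<le> Kz * real n" using Zs order_trans[OF sum_nonneg] by (metis zero_le_power2)
  have rhs_eq: "rhs z y {..<n} = (\<Sum>j<n. s j *\<^sub>R z j) + (\<Sum>j<n. e j *\<^sub>R z j)"
    by (simp add: rhs_def y_def scaleR_add_left sum.distrib)
  have nb: "(norm (rhs z y {..<n}))\<^sup>2 \<le> (2 * B * Kz + 2 * K) * real n"
  proof -
    have "(norm (rhs z y {..<n}))\<^sup>2 \<le> (norm (\<Sum>j<n. s j *\<^sub>R z j) + norm (\<Sum>j<n. e j *\<^sub>R z j))\<^sup>2"
      unfolding rhs_eq by (rule power_mono[OF norm_triangle_ineq]) simp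
    also have "\<dots> \<le> 2 * (norm (\<Sum>j<n. s j *\<^sub>R z j))\<^sup>2 + 2 * (norm (\<Sum>j<n. e j *\<^sub>R z j))\<^sup>2"
      by (rule sq_sum_le')
    also have "(norm (\<Sum>j<n. s j *\<^sub>R z j))\<^sup>2 \<le> B * (Kz * real n)"
      by (rule order_trans[OF norm_sum_scale_sq mult_mono[OF Ss Zs B0]]) (simp add: sum_nonneg)
    finally show ?thesis using Ez by (simp add: algebra_simps)
  qed
  have F1: "(\<Sum>i<n. (yh i)\<^sup>2) \<le> (norm (rhs z y {..<n}))\<^sup>2 / d"
    unfolding yh_def y_def[symmetric] by (rule ridge_fit_bound[OF _ lam d lb']) simp
  also have "\<dots> \<le> (2 * B * Kz + 2 * K) * real n / d"
    by (rule divide_right_mono[OF nb]) (use d in simp)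
  also have "\<dots> = (2 * B * Kz + 2 * K) / c" using n c by (simp add: d_def)
  finally show W: "(\<Sum>i<n. (yh i)\<^sup>2) \<le> (2 * B * Kz + 2 * K) / c" .
  define \<gamma> where "\<gamma> = 2 * \<rho> / c"
  have g0: "0 \<le> \<gamma>" using rho c by (simp add: \<gamma>_def)
  define g where "g i = 2 * (norm (z i))\<^sup>2 / d" for i
  have gi: "0 \<le> g i" "g i \<le> \<gamma>" if "i < n" for i
  proof -
    show "0 \<le> g i" using d by (simp add: g_def)
    have "2 * (norm (z i))\<^sup>2 \<le> 2 * (\<rho> * real n)" using zmax[OF that] by simp
    then have "g i \<le> 2 * (\<rho> * real n) / d" unfolding g_def by (rule divide_right_mono) (use d in simp)
    also have "\<dots> = \<gamma>" using n c by (simp add: d_def \<gamma>_def)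
    finally show "g i \<le> \<gamma>" .
  qed
  have pt: "(yt i - yh i)\<^sup>2 \<le> 2 * \<gamma>\<^sup>2 * (yh i)\<^sup>2 + 4 * \<gamma>\<^sup>2 * (s i)\<^sup>2 + 4 * \<gamma> * (2 / d) * ((norm (z i))\<^sup>2 * (e i)\<^sup>2)"
    if i: "i < n" for i
  proof -
    have zi: "(norm (z i))\<^sup>2 \<le> d / 2"
      using zmax[OF i] mult_right_mono[OF rho(2), of "real n"] by (simp add: d_def)
    have loo: "\<bar>yt i - yh i\<bar> \<le> g i * \<bar>yh i - y i\<bar>"
      unfolding yt_def yh_def g_def y_def[symmetric]
      by (rule ridge_loo_bound[OF _ lam d lb' _ zi]) (use i in auto)
    have "(yt i - yh i)\<^sup>2 \<le> (g i * \<bar>yh i - y i\<bar>)\<^sup>2"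
      using power_mono[OF loo abs_ge_zero, of 2] by simp
    also have "\<dots> = (g i)\<^sup>2 * (yh i - y i)\<^sup>2" by (simp add: power_mult_distrib)
    also have "\<dots> \<le> (g i)\<^sup>2 * (2 * (yh i)\<^sup>2 + 2 * (y i)\<^sup>2)"
      by (rule mult_left_mono[OF sq_diff_le']) simp
    also have "(y i)\<^sup>2 \<le> 2 * (s i)\<^sup>2 + 2 * (e i)\<^sup>2" unfolding y_def by (rule sq_sum_le')
    have g2: "(g i)\<^sup>2 \<le> \<gamma>\<^sup>2" using gi[OF i] by (simp add: power_mono)
    have g2': "(g i)\<^sup>2 \<le> \<gamma> * g i" using gi[OF i] by (simp add: power2_eq_square mult_right_mono)
    have "(g i)\<^sup>2 * (2 * (yh i)\<^sup>2 + 2 * (y i)\<^sup>2) \<le> (g i)\<^sup>2 * (2 * (yh i)\<^sup>2 + 2 * (2 * (s i)\<^sup>2 + 2 * (e i)\<^sup>2))"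
      using \<open>(y i)\<^sup>2 \<le> _\<close> by (intro mult_left_mono) auto
    also have "\<dots> = 2 * ((g i)\<^sup>2 * (yh i)\<^sup>2) + 4 * ((g i)\<^sup>2 * (s i)\<^sup>2) + 4 * ((g i)\<^sup>2 * (e i)\<^sup>2)"
      by (simp add: algebra_simps)
    also have "\<dots> \<le> 2 * (\<gamma>\<^sup>2 * (yh i)\<^sup>2) + 4 * (\<gamma>\<^sup>2 * (s i)\<^sup>2) + 4 * ((\<gamma> * g i) * (e i)\<^sup>2)"
      using mult_right_mono[OF g2, of "(yh i)\<^sup>2"] mult_right_mono[OF g2, of "(s i)\<^sup>2"]
        mult_right_mono[OF g2', of "(e i)\<^sup>2"] by simp
    also have "(\<gamma> * g i) * (e i)\<^sup>2 = \<gamma> * (2 / d) * ((norm (z i))\<^sup>2 * (e i)\<^sup>2)"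
      by (simp add: g_def)
    finally show ?thesis by (simp add: mult_ac)
  qed
  have "(\<Sum>i<n. (yt i - yh i)\<^sup>2)
      \<le> (\<Sum>i<n. 2 * \<gamma>\<^sup>2 * (yh i)\<^sup>2 + 4 * \<gamma>\<^sup>2 * (s i)\<^sup>2 + 4 * \<gamma> * (2 / d) * ((norm (z i))\<^sup>2 * (e i)\<^sup>2))"
    by (rule sum_mono) (use pt in auto)
  also have "\<dots> = 2 * \<gamma>\<^sup>2 * (\<Sum>i<n. (yh i)\<^sup>2) + 4 * \<gamma>\<^sup>2 * (\<Sum>i<n. (s i)\<^sup>2)
        + 4 * \<gamma> * (2 / d) * (\<Sum>i<n. (norm (z i))\<^sup>2 * (e i)\<^sup>2)"
    by (simp add: sum.distrib sum_distrib_left)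
  also have "\<dots> \<le> 2 * \<gamma>\<^sup>2 * ((2 * B * Kz + 2 * K) / c) + 4 * \<gamma>\<^sup>2 * B + 4 * \<gamma> * (2 / d) * (K * real n)"
  proof -
    have "0 \<le> 2 * \<gamma>\<^sup>2" "0 \<le> 4 * \<gamma>\<^sup>2" "0 \<le> 4 * \<gamma> * (2 / d)" using g0 d by auto
    then show ?thesis using W Ss Ze by (intro add_mono mult_left_mono) auto
  qed
  also have "4 * \<gamma> * (2 / d) * (K * real n) = 8 * \<gamma> * K / c"
    using n c by (simp add: d_def)
  finally show "(\<Sum>i<n. (yt i - yh i)\<^sup>2)
         \<le> 2 * (2 * \<rho> / c)\<^sup>2 * ((2 * B * Kz + 2 * K) / c) + 4 * (2 * \<rho> / c)\<^sup>2 * B + 8 * (2 * \<rho> / c) * K / c"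
    by (simp add: \<gamma>_def)
qed

lemma abs_prod_le: "\<bar>(a::real) * b\<bar> \<le> a\<^sup>2 + b\<^sup>2"
proof -
  have "0 \<le> (\<bar>a\<bar> - \<bar>b\<bar>)\<^sup>2" by simp
  then have "2 * (\<bar>a\<bar> * \<bar>b\<bar>) \<le> \<bar>a\<bar>\<^sup>2 + \<bar>b\<bar>\<^sup>2" by (simp add: power2_diff)
  moreover have "0 \<le> \<bar>a\<bar> * \<bar>b\<bar>" by simp
  ultimately have "\<bar>a\<bar> * \<bar>b\<bar> \<le> a\<^sup>2 + b\<^sup>2" by (simp only: power2_abs)
  then show ?thesis by (simp add: abs_mult)
qed

lemma outer_prob_le:
  assumes "A \<in> sets M" "S \<inter> space M \<subseteq> A"
  shows "outer_prob M S \<le> measure M A"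
  unfolding outer_prob_def
  by (rule cInf_lower) (use assms in \<open>auto intro!: bdd_belowI[where m=0]\<close>)

lemma outer_prob_nonneg: "0 \<le> outer_prob M S"
  unfolding outer_prob_def
  by (rule cInf_greatest) auto

locale gset = prob_space M for M :: "'w measure" +
  fixes E :: "nat \<Rightarrow> 'w \<Rightarrow> nat \<Rightarrow> real^'p"
    and \<epsilon> :: "nat \<Rightarrow> 'w \<Rightarrow> nat \<Rightarrow> real"
    and \<sigma> \<sigma>z :: real
  assumes sig: "\<sigma> > 0" and sigz: "\<sigma>z > 0"
    and E_normal: "\<And>n i j. i < n \<Longrightarrow>
          distributed M lborel (\<lambda>\<omega>. E n \<omega> i $ j) (normal_density 0 \<sigma>z)"
    and eps_normal: "\<And>n i. i < n \<Longrightarrow>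
          distributed M lborel (\<lambda>\<omega>. \<epsilon> n \<omega> i) (normal_density 0 \<sigma>)"
    and indep: "\<And>n. indep_vars (\<lambda>_. borel)
          (\<lambda>k \<omega>. case k of Inl (i, j) \<Rightarrow> E n \<omega> i $ j | Inr i \<Rightarrow> \<epsilon> n \<omega> i)
          (({..<n} \<times> UNIV) <+> {..<n})"
begin

definition "Et n \<omega> i = (if i < n then E n \<omega> i else 0)"
definition "et n \<omega> i = (if i < n then \<epsilon> n \<omega> i else 0)"

lemma gauss_facts:
  assumes s: "s > 0" and D: "distributed M lborel G (normal_density 0 s)"
  shows "G \<in> borel_measurable M" "\<And>k. integrable M (\<lambda>\<omega>. G \<omega> ^ k)"
    "expectation G = 0" "expectation (\<lambda>\<omega>. (G \<omega>)\<^sup>2) = s\<^sup>2"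
    "expectation (\<lambda>\<omega>. G \<omega> ^ 4) = 3 * s ^ 4"
proof -
  show "G \<in> borel_measurable M" using distributed_measurable[OF D] by simp
  show "integrable M (\<lambda>\<omega>. G \<omega> ^ k)" for k
    using distributed_integrable[OF D, of "\<lambda>x. x ^ k"]
      integrable_normal_moment[OF s, where \<mu>=0 and k=k] by simp
  show "expectation G = 0"
    using normal_distributed_expectation[OF s D] .
  have "expectation (\<lambda>\<omega>. (G \<omega>) ^ (2 * 1)) = fact (2 * 1) / ((2 / s\<^sup>2)^1 * fact 1)"
    using distributed_integral[OF D, of "\<lambda>x. x ^ (2*1)", symmetric]
      integral_normal_moment_even[OF s, where \<mu>=0 and k=1] by simp
  then show "expectation (\<lambda>\<omega>. (G \<omega>)\<^sup>2) = s\<^sup>2" by simp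
  have "expectation (\<lambda>\<omega>. (G \<omega>) ^ (2 * 2)) = fact (2 * 2) / ((2 / s\<^sup>2)^2 * fact 2)"
    using distributed_integral[OF D, of "\<lambda>x. x ^ (2*2)", symmetric]
      integral_normal_moment_even[OF s, where \<mu>=0 and k=2] by simp
  then show "expectation (\<lambda>\<omega>. G \<omega> ^ 4) = 3 * s ^ 4"
    by (simp add: fact_numeral power2_eq_square field_simps power4_eq_xxxx)
qed

lemma Et_meas[measurable]: "(\<lambda>\<omega>. Et n \<omega> i $ k) \<in> borel_measurable M"
  unfolding Et_def
  by (cases "i < n") (auto intro: gauss_facts(1)[OF sigz E_normal])

lemma et_meas[measurable]: "(\<lambda>\<omega>. et n \<omega> i) \<in> borel_measurable M"
  unfolding et_def
  by (cases "i < n") (auto intro: gauss_facts(1)[OF sig eps_normal])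


lemma Et_lt: "i < n \<Longrightarrow> Et n \<omega> i = E n \<omega> i" by (simp add: Et_def)
lemma et_lt: "i < n \<Longrightarrow> et n \<omega> i = \<epsilon> n \<omega> i" by (simp add: et_def)

lemma Et_normal: "i < n \<Longrightarrow> distributed M lborel (\<lambda>\<omega>. Et n \<omega> i $ k) (normal_density 0 \<sigma>z)"
  by (simp add: Et_lt E_normal)
lemma et_normal: "i < n \<Longrightarrow> distributed M lborel (\<lambda>\<omega>. et n \<omega> i) (normal_density 0 \<sigma>)"
  by (simp add: et_lt eps_normal)

lemmas Et_int = gauss_facts(2)[OF sigz Et_normal]
lemmas Et_E1 = gauss_facts(3)[OF sigz Et_normal]
lemmas Et_E2 = gauss_facts(4)[OF sigz Et_normal]
lemmas Et_E4 = gauss_facts(5)[OF sigz Et_normal]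
lemmas et_int = gauss_facts(2)[OF sig et_normal]
lemmas et_E1 = gauss_facts(3)[OF sig et_normal]
lemmas et_E2 = gauss_facts(4)[OF sig et_normal]
lemmas et_E4 = gauss_facts(5)[OF sig et_normal]

lemma int_prod2:
  fixes f g :: "'w \<Rightarrow> real"
  assumes f: "f \<in> borel_measurable M" and g: "g \<in> borel_measurable M"
    and "integrable M (\<lambda>\<omega>. (f \<omega>)\<^sup>2)" "integrable M (\<lambda>\<omega>. (g \<omega>)\<^sup>2)"
  shows "integrable M (\<lambda>\<omega>. f \<omega> * g \<omega>)"
proof (rule Bochner_Integration.integrable_bound[where f="\<lambda>\<omega>. (f \<omega>)\<^sup>2 + (g \<omega>)\<^sup>2"])
  show "integrable M (\<lambda>\<omega>. (f \<omega>)\<^sup>2 + (g \<omega>)\<^sup>2)" using assms by simp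
  show "(\<lambda>\<omega>. f \<omega> * g \<omega>) \<in> borel_measurable M" using f g by simp
  have "norm (f \<omega> * g \<omega>) \<le> norm ((f \<omega>)\<^sup>2 + (g \<omega>)\<^sup>2)" for \<omega>
    using abs_prod_le[of "f \<omega>" "g \<omega>"] by simp
  then show "AE \<omega> in M. norm (f \<omega> * g \<omega>) \<le> norm ((f \<omega>)\<^sup>2 + (g \<omega>)\<^sup>2)" by simp
qed

lemma sum_sq_expect:
  fixes Y :: "'i \<Rightarrow> 'w \<Rightarrow> real"
  assumes fin: "finite S" and meas: "\<And>i. i \<in> S \<Longrightarrow> Y i \<in> borel_measurable M"
    and sq: "\<And>i. i \<in> S \<Longrightarrow> integrable M (\<lambda>\<omega>. (Y i \<omega>)\<^sup>2)"
    and cross: "\<And>i j. i \<in> S \<Longrightarrow> j \<in> S \<Longrightarrow> i \<noteq> j \<Longrightarrow> expectation (\<lambda>\<omega>. Y i \<omega> * Y j \<omega>) = 0"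
  shows "integrable M (\<lambda>\<omega>. (\<Sum>i\<in>S. Y i \<omega>)\<^sup>2)"
    and "expectation (\<lambda>\<omega>. (\<Sum>i\<in>S. Y i \<omega>)\<^sup>2) = (\<Sum>i\<in>S. expectation (\<lambda>\<omega>. (Y i \<omega>)\<^sup>2))"
proof -
  have eq: "(\<lambda>\<omega>. (\<Sum>i\<in>S. Y i \<omega>)\<^sup>2) = (\<lambda>\<omega>. \<Sum>i\<in>S. \<Sum>j\<in>S. Y i \<omega> * Y j \<omega>)"
    by (simp add: power2_eq_square sum_product)
  have pint: "integrable M (\<lambda>\<omega>. Y i \<omega> * Y j \<omega>)" if "i \<in> S" "j \<in> S" for i j
    using that by (intro int_prod2 meas sq)
  have pint2: "integrable M (\<lambda>\<omega>. \<Sum>j\<in>S. Y i \<omega> * Y j \<omega>)" if "i \<in> S" for i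
    by (rule Bochner_Integration.integrable_sum) (rule pint[OF that])
  show "integrable M (\<lambda>\<omega>. (\<Sum>i\<in>S. Y i \<omega>)\<^sup>2)"
    unfolding eq by (rule Bochner_Integration.integrable_sum) (rule pint2)
  have "expectation (\<lambda>\<omega>. (\<Sum>i\<in>S. Y i \<omega>)\<^sup>2) = (\<Sum>i\<in>S. expectation (\<lambda>\<omega>. \<Sum>j\<in>S. Y i \<omega> * Y j \<omega>))"
    unfolding eq by (rule Bochner_Integration.integral_sum) (rule pint2)
  also have "\<dots> = (\<Sum>i\<in>S. \<Sum>j\<in>S. expectation (\<lambda>\<omega>. Y i \<omega> * Y j \<omega>))"
    by (rule sum.cong[OF refl], rule Bochner_Integration.integral_sum, rule pint) auto
  also have "\<dots> = (\<Sum>i\<in>S. \<Sum>j\<in>S. if j = i then expectation (\<lambda>\<omega>. (Y i \<omega>)\<^sup>2) else 0)"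
    by (rule sum.cong[OF refl], rule sum.cong[OF refl]) (auto simp: cross power2_eq_square)
  also have "\<dots> = (\<Sum>i\<in>S. expectation (\<lambda>\<omega>. (Y i \<omega>)\<^sup>2))"
    using fin by simp
  finally show "expectation (\<lambda>\<omega>. (\<Sum>i\<in>S. Y i \<omega>)\<^sup>2) = (\<Sum>i\<in>S. expectation (\<lambda>\<omega>. (Y i \<omega>)\<^sup>2))" .
qed

lemma markov:
  fixes u :: "'w \<Rightarrow> real"
  assumes "integrable M u" "\<And>\<omega>. 0 \<le> u \<omega>" "c > 0"
  shows "prob {\<omega>\<in>space M. c \<le> u \<omega>} \<le> expectation u / c"
  using integral_Markov_inequality_measure[of M u "space M" c] assms by auto

definition "Fn n = (\<lambda>k \<omega>. case k of Inl (i, j) \<Rightarrow> E n \<omega> i $ j | Inr i \<Rightarrow> \<epsilon> n \<omega> i)"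
definition "In n = (({..<n} \<times> (UNIV::'p set)) <+> {..<n})"
definition "Blk (i::nat) = (({i} \<times> (UNIV::'p set)) <+> {i})"
definition "rst n \<omega> A = restrict (\<lambda>k. Fn n k \<omega>) A"

lemma indepF: "indep_vars (\<lambda>_. borel) (Fn n) (In n)"
  unfolding Fn_def In_def by (rule indep)

lemma Inl_Plus_iff[simp]: "Inl x \<in> A <+> B \<longleftrightarrow> x \<in> A" by auto
lemma Inr_Plus_iff[simp]: "Inr x \<in> A <+> B \<longleftrightarrow> x \<in> B" by auto

lemma rst_Inl[simp]: "Inl (i, k) \<in> A \<Longrightarrow> rst n \<omega> A (Inl (i, k)) = E n \<omega> i $ k"
  by (simp add: rst_def Fn_def)
lemma rst_Inr[simp]: "Inr i \<in> A \<Longrightarrow> rst n \<omega> A (Inr i) = \<epsilon> n \<omega> i"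
  by (simp add: rst_def Fn_def)
lemma Inl_Blk[simp]: "Inl (i, k) \<in> Blk i" by (simp add: Blk_def)
lemma Inr_Blk[simp]: "Inr i \<in> Blk i" by (simp add: Blk_def)
lemma Blk_In: "i < n \<Longrightarrow> Blk i \<subseteq> In n" by (auto simp: Blk_def In_def)
lemma Blk_disj: "i \<noteq> j \<Longrightarrow> Blk i \<inter> Blk j = {}" by (auto simp: Blk_def)

lemma indep_cross:
  assumes dis: "A \<inter> B = {}" and sub: "A \<subseteq> In n" "B \<subseteq> In n"
    and ga: "ga \<in> borel_measurable (PiM A (\<lambda>_. borel))"
    and gb: "gb \<in> borel_measurable (PiM B (\<lambda>_. borel))"
    and Ya: "\<And>\<omega>. Ya \<omega> = ga (rst n \<omega> A)" and Yb: "\<And>\<omega>. Yb \<omega> = gb (rst n \<omega> B)"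
    and ia: "integrable M Ya" and ib: "integrable M Yb"
  shows "expectation (\<lambda>\<omega>. Ya \<omega> * Yb \<omega>) = expectation Ya * expectation (Yb :: 'w \<Rightarrow> real)"
proof -
  have ea: "Ya = (\<lambda>\<omega>. ga (rst n \<omega> A))" using Ya by auto
  have eb: "Yb = (\<lambda>\<omega>. gb (rst n \<omega> B))" using Yb by auto
  have "indep_var borel (ga \<circ> (\<lambda>\<omega>. restrict (\<lambda>k. Fn n k \<omega>) A))
                  borel (gb \<circ> (\<lambda>\<omega>. restrict (\<lambda>k. Fn n k \<omega>) B))"
    by (rule indep_var_compose[OF indep_var_restrict[OF indepF dis sub] ga gb])
  then have iv: "indep_var borel Ya borel Yb"
    unfolding ea eb by (simp add: comp_def rst_def)
  show ?thesis by (rule indep_var_lebesgue_integral[OF iv ia ib])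
qed

lemma Et_pair:
  assumes "i < n" "j < n" "(i, k) \<noteq> (j, l)"
  shows "expectation (\<lambda>\<omega>. Et n \<omega> i $ k * Et n \<omega> j $ l) = 0"
proof -
  have "expectation (\<lambda>\<omega>. Et n \<omega> i $ k * Et n \<omega> j $ l)
      = expectation (\<lambda>\<omega>. Et n \<omega> i $ k) * expectation (\<lambda>\<omega>. Et n \<omega> j $ l)"
  proof (rule indep_cross[where A="{Inl (i, k)}" and B="{Inl (j, l)}"
        and ga="\<lambda>f. f (Inl (i, k))" and gb="\<lambda>f. f (Inl (j, l))"])
    show "{Inl (i, k)} \<inter> {Inl (j, l)} = {}" using assms by auto
    show "{Inl (i, k)} \<subseteq> In n" "{Inl (j, l)} \<subseteq> In n" using assms by (auto simp: In_def)
    show "(\<lambda>f. f (Inl (i, k))) \<in> borel_measurable (PiM {Inl (i, k)} (\<lambda>_. borel))" by measurable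
    show "(\<lambda>f. f (Inl (j, l))) \<in> borel_measurable (PiM {Inl (j, l)} (\<lambda>_. borel))" by measurable
    show "Et n \<omega> i $ k = rst n \<omega> {Inl (i, k)} (Inl (i, k))" for \<omega> using assms by (simp add: Et_lt)
    show "Et n \<omega> j $ l = rst n \<omega> {Inl (j, l)} (Inl (j, l))" for \<omega> using assms by (simp add: Et_lt)
    show "integrable M (\<lambda>\<omega>. Et n \<omega> i $ k)" using Et_int[OF assms(1), of k 1] by simp
    show "integrable M (\<lambda>\<omega>. Et n \<omega> j $ l)" using Et_int[OF assms(2), of l 1] by simp
  qed
  then show ?thesis using Et_E1[OF assms(1)] by simp
qed

lemma et_Et_pair:
  assumes "i < n" "j < n"
  shows "expectation (\<lambda>\<omega>. et n \<omega> i * Et n \<omega> j $ l) = 0"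
proof -
  have "expectation (\<lambda>\<omega>. et n \<omega> i * Et n \<omega> j $ l)
      = expectation (\<lambda>\<omega>. et n \<omega> i) * expectation (\<lambda>\<omega>. Et n \<omega> j $ l)"
  proof (rule indep_cross[where A="{Inr i}" and B="{Inl (j, l)}"
        and ga="\<lambda>f. f (Inr i)" and gb="\<lambda>f. f (Inl (j, l))"])
    show "{Inr i} \<inter> {Inl (j, l)} = {}" using assms by auto
    show "{Inr i} \<subseteq> In n" "{Inl (j, l)} \<subseteq> In n" using assms by (auto simp: In_def)
    show "(\<lambda>f. f (Inr i)) \<in> borel_measurable (PiM {Inr i} (\<lambda>_. borel))" by measurable
    show "(\<lambda>f. f (Inl (j, l))) \<in> borel_measurable (PiM {Inl (j, l)} (\<lambda>_. borel))" by measurable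
    show "et n \<omega> i = rst n \<omega> {Inr i} (Inr i)" for \<omega> using assms by (simp add: et_lt)
    show "Et n \<omega> j $ l = rst n \<omega> {Inl (j, l)} (Inl (j, l))" for \<omega> using assms by (simp add: Et_lt)
    show "integrable M (\<lambda>\<omega>. et n \<omega> i)" using et_int[OF assms(1), of 1] by simp
    show "integrable M (\<lambda>\<omega>. Et n \<omega> j $ l)" using Et_int[OF assms(2), of l 1] by simp
  qed
  then show ?thesis using et_E1[OF assms(1)] by simp
qed

end

context gset begin

lemma Et_ip: "i < n \<Longrightarrow> integrable M (\<lambda>\<omega>. (Et n \<omega> i $ k) ^ m)"
  using gauss_facts(2)[OF sigz Et_normal] by blast
lemma et_ip: "i < n \<Longrightarrow> integrable M (\<lambda>\<omega>. (et n \<omega> i) ^ m)"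
  using gauss_facts(2)[OF sig et_normal] by blast
lemma Et_m1: "i < n \<Longrightarrow> expectation (\<lambda>\<omega>. Et n \<omega> i $ k) = 0"
  using gauss_facts(3)[OF sigz Et_normal] by blast
lemma et_m1: "i < n \<Longrightarrow> expectation (\<lambda>\<omega>. et n \<omega> i) = 0"
  using gauss_facts(3)[OF sig et_normal] by blast
lemma Et_m2: "i < n \<Longrightarrow> expectation (\<lambda>\<omega>. (Et n \<omega> i $ k)\<^sup>2) = \<sigma>z\<^sup>2"
  using gauss_facts(4)[OF sigz Et_normal] by blast
lemma et_m2: "i < n \<Longrightarrow> expectation (\<lambda>\<omega>. (et n \<omega> i)\<^sup>2) = \<sigma>\<^sup>2"
  using gauss_facts(4)[OF sig et_normal] by blast
lemma Et_m4: "i < n \<Longrightarrow> expectation (\<lambda>\<omega>. (Et n \<omega> i $ k) ^ 4) = 3 * \<sigma>z ^ 4"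
  using gauss_facts(5)[OF sigz Et_normal] by blast
lemma et_m4: "i < n \<Longrightarrow> expectation (\<lambda>\<omega>. (et n \<omega> i) ^ 4) = 3 * \<sigma> ^ 4"
  using gauss_facts(5)[OF sig et_normal] by blast

lemma int_sqsq:
  fixes F G :: "'w \<Rightarrow> real"
  assumes "F \<in> borel_measurable M" "G \<in> borel_measurable M"
    "integrable M (\<lambda>\<omega>. (F \<omega>) ^ 4)" "integrable M (\<lambda>\<omega>. (G \<omega>) ^ 4)"
  shows "integrable M (\<lambda>\<omega>. (F \<omega>)\<^sup>2 * (G \<omega>)\<^sup>2)"
proof (rule int_prod2)
  show "integrable M (\<lambda>\<omega>. ((F \<omega>)\<^sup>2)\<^sup>2)" using assms(3) by (simp add: power_mult[symmetric])
  show "integrable M (\<lambda>\<omega>. ((G \<omega>)\<^sup>2)\<^sup>2)" using assms(4) by (simp add: power_mult[symmetric])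
qed (use assms in auto)

lemma sqsq_le: "(x::real)\<^sup>2 * y\<^sup>2 \<le> x ^ 4 + y ^ 4"
proof -
  have "\<bar>x\<^sup>2 * y\<^sup>2\<bar> \<le> (x\<^sup>2)\<^sup>2 + (y\<^sup>2)\<^sup>2" by (rule abs_prod_le)
  then show ?thesis by (simp add: power_mult[symmetric])
qed

lemma sq_diff_le: "((x::real) - y)\<^sup>2 \<le> 2 * x\<^sup>2 + 2 * y\<^sup>2"
proof -
  have "0 \<le> (x + y)\<^sup>2" by simp
  then show ?thesis unfolding power2_diff power2_sum by linarith
qed

lemma sq_sum_le: "((x::real) + y)\<^sup>2 \<le> 2 * x\<^sup>2 + 2 * y\<^sup>2"
proof -
  have "0 \<le> (x - y)\<^sup>2" by simp
  then show ?thesis unfolding power2_diff power2_sum by linarith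
qed

lemma lin_sq:
  fixes c :: "nat \<Rightarrow> real"
  shows "integrable M (\<lambda>\<omega>. (\<Sum>j<n. c j * Et n \<omega> j $ l)\<^sup>2)"
    and "expectation (\<lambda>\<omega>. (\<Sum>j<n. c j * Et n \<omega> j $ l)\<^sup>2) = \<sigma>z\<^sup>2 * (\<Sum>j<n. (c j)\<^sup>2)"
proof -
  have sq: "integrable M (\<lambda>\<omega>. (c j * Et n \<omega> j $ l)\<^sup>2)" if "j < n" for j
    using Et_ip[OF that, of l 2] by (simp add: power_mult_distrib)
  have cross: "expectation (\<lambda>\<omega>. c i * Et n \<omega> i $ l * (c j * Et n \<omega> j $ l)) = 0"
    if "i \<in> {..<n}" "j \<in> {..<n}" "i \<noteq> j" for i j
  proof -
    have "(\<lambda>\<omega>. c i * Et n \<omega> i $ l * (c j * Et n \<omega> j $ l)) = (\<lambda>\<omega>. (c i * c j) * (Et n \<omega> i $ l * Et n \<omega> j $ l))"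
      by (simp add: ac_simps)
    then show ?thesis using Et_pair[of i n j l l] that by simp
  qed
  show "integrable M (\<lambda>\<omega>. (\<Sum>j<n. c j * Et n \<omega> j $ l)\<^sup>2)"
    by (rule sum_sq_expect(1)) (use sq cross in auto)
  have "expectation (\<lambda>\<omega>. (\<Sum>j<n. c j * Et n \<omega> j $ l)\<^sup>2) = (\<Sum>j<n. expectation (\<lambda>\<omega>. (c j * Et n \<omega> j $ l)\<^sup>2))"
    by (rule sum_sq_expect(2)) (use sq cross in auto)
  also have "\<dots> = (\<Sum>j<n. (c j)\<^sup>2 * \<sigma>z\<^sup>2)"
    by (rule sum.cong) (auto simp: power_mult_distrib Et_m2)
  finally show "expectation (\<lambda>\<omega>. (\<Sum>j<n. c j * Et n \<omega> j $ l)\<^sup>2) = \<sigma>z\<^sup>2 * (\<Sum>j<n. (c j)\<^sup>2)"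
    by (simp add: sum_distrib_left mult.commute)
qed

lemma S_sq:
  fixes k l :: 'p and d :: real
  defines "d \<equiv> (if k = l then \<sigma>z\<^sup>2 else 0)"
  shows "integrable M (\<lambda>\<omega>. (\<Sum>j<n. Et n \<omega> j $ k * Et n \<omega> j $ l - d)\<^sup>2)"
    and "expectation (\<lambda>\<omega>. (\<Sum>j<n. Et n \<omega> j $ k * Et n \<omega> j $ l - d)\<^sup>2) \<le> 14 * real n * \<sigma>z ^ 4"
proof -
  have d2: "d\<^sup>2 \<le> \<sigma>z ^ 4" by (simp add: d_def power_mult[symmetric])
  define B where "B j \<omega> = 2 * (Et n \<omega> j $ k) ^ 4 + 2 * (Et n \<omega> j $ l) ^ 4 + 2 * d\<^sup>2" for j \<omega>
  have ptw: "(Et n \<omega> j $ k * Et n \<omega> j $ l - d)\<^sup>2 \<le> B j \<omega>" for j \<omega>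
  proof -
    have "(Et n \<omega> j $ k * Et n \<omega> j $ l - d)\<^sup>2 \<le> 2 * (Et n \<omega> j $ k * Et n \<omega> j $ l)\<^sup>2 + 2 * d\<^sup>2"
      by (rule sq_diff_le)
    also have "(Et n \<omega> j $ k * Et n \<omega> j $ l)\<^sup>2 \<le> (Et n \<omega> j $ k) ^ 4 + (Et n \<omega> j $ l) ^ 4"
      using sqsq_le by (simp add: power_mult_distrib)
    finally show ?thesis unfolding B_def by simp
  qed
  have Bint: "integrable M (B j)" if "j < n" for j
    unfolding B_def using Et_ip[OF that] by simp
  have sq: "integrable M (\<lambda>\<omega>. (Et n \<omega> j $ k * Et n \<omega> j $ l - d)\<^sup>2)" if "j < n" for j
    by (rule Bochner_Integration.integrable_bound[OF Bint[OF that]]) (use ptw in \<open>auto simp: B_def\<close>)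
  have pint: "integrable M (\<lambda>\<omega>. Et n \<omega> j $ k * Et n \<omega> j $ l)" if "j < n" for j
    by (rule int_prod2) (use Et_ip[OF that] in auto)
  have Y_int: "integrable M (\<lambda>\<omega>. Et n \<omega> j $ k * Et n \<omega> j $ l - d)" if "j < n" for j
    using pint[OF that] by simp
  have mean0: "expectation (\<lambda>\<omega>. Et n \<omega> j $ k * Et n \<omega> j $ l - d) = 0" if "j < n" for j
  proof -
    have "expectation (\<lambda>\<omega>. Et n \<omega> j $ k * Et n \<omega> j $ l - d) = expectation (\<lambda>\<omega>. Et n \<omega> j $ k * Et n \<omega> j $ l) - d"
      using pint[OF that] by (simp add: prob_space)
    also have "expectation (\<lambda>\<omega>. Et n \<omega> j $ k * Et n \<omega> j $ l) = d"
    proof (cases "k = l")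
      case True then show ?thesis using Et_m2[OF that, of k] by (simp add: d_def power2_eq_square)
    next
      case False then show ?thesis using Et_pair[OF that that, of k l] by (simp add: d_def)
    qed
    finally show ?thesis by simp
  qed
  have cross: "expectation (\<lambda>\<omega>. (Et n \<omega> i $ k * Et n \<omega> i $ l - d) * (Et n \<omega> j $ k * Et n \<omega> j $ l - d)) = 0"
    if "i \<in> {..<n}" "j \<in> {..<n}" "i \<noteq> j" for i j
  proof -
    have "expectation (\<lambda>\<omega>. (Et n \<omega> i $ k * Et n \<omega> i $ l - d) * (Et n \<omega> j $ k * Et n \<omega> j $ l - d))
      = expectation (\<lambda>\<omega>. Et n \<omega> i $ k * Et n \<omega> i $ l - d) * expectation (\<lambda>\<omega>. Et n \<omega> j $ k * Et n \<omega> j $ l - d)"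
    proof (rule indep_cross[where A="Blk i" and B="Blk j"
        and ga="\<lambda>f. f (Inl (i, k)) * f (Inl (i, l)) - d" and gb="\<lambda>f. f (Inl (j, k)) * f (Inl (j, l)) - d"])
      show "Blk i \<inter> Blk j = {}" using that by (simp add: Blk_disj)
      show "Blk i \<subseteq> In n" "Blk j \<subseteq> In n" using that Blk_In by auto
      show "(\<lambda>f. f (Inl (i, k)) * f (Inl (i, l)) - d) \<in> borel_measurable (PiM (Blk i) (\<lambda>_. borel))" by measurable
      show "(\<lambda>f. f (Inl (j, k)) * f (Inl (j, l)) - d) \<in> borel_measurable (PiM (Blk j) (\<lambda>_. borel))" by measurable
      show "Et n \<omega> i $ k * Et n \<omega> i $ l - d = rst n \<omega> (Blk i) (Inl (i, k)) * rst n \<omega> (Blk i) (Inl (i, l)) - d" for \<omega>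
        using that by (simp add: Et_lt)
      show "Et n \<omega> j $ k * Et n \<omega> j $ l - d = rst n \<omega> (Blk j) (Inl (j, k)) * rst n \<omega> (Blk j) (Inl (j, l)) - d" for \<omega>
        using that by (simp add: Et_lt)
    qed (use Y_int that in auto)
    then show ?thesis using mean0 that by simp
  qed
  show "integrable M (\<lambda>\<omega>. (\<Sum>j<n. Et n \<omega> j $ k * Et n \<omega> j $ l - d)\<^sup>2)"
    by (rule sum_sq_expect(1)) (use sq cross in auto)
  have "expectation (\<lambda>\<omega>. (\<Sum>j<n. Et n \<omega> j $ k * Et n \<omega> j $ l - d)\<^sup>2)
       = (\<Sum>j<n. expectation (\<lambda>\<omega>. (Et n \<omega> j $ k * Et n \<omega> j $ l - d)\<^sup>2))"
    by (rule sum_sq_expect(2)) (use sq cross in auto)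
  also have "\<dots> \<le> (\<Sum>j<n. 14 * \<sigma>z ^ 4)"
  proof (rule sum_mono)
    fix j assume j: "j \<in> {..<n}"
    have "expectation (\<lambda>\<omega>. (Et n \<omega> j $ k * Et n \<omega> j $ l - d)\<^sup>2) \<le> expectation (B j)"
      by (rule integral_mono[OF sq Bint]) (use j ptw in auto)
    also have "expectation (B j) = 2 * (3 * \<sigma>z ^ 4) + 2 * (3 * \<sigma>z ^ 4) + 2 * d\<^sup>2"
      unfolding B_def using j Et_ip[of j n] by (simp add: Et_m4 prob_space)
    also have "\<dots> \<le> 14 * \<sigma>z ^ 4" using d2 by simp
    finally show "expectation (\<lambda>\<omega>. (Et n \<omega> j $ k * Et n \<omega> j $ l - d)\<^sup>2) \<le> 14 * \<sigma>z ^ 4" .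
  qed
  also have "\<dots> = 14 * real n * \<sigma>z ^ 4" by simp
  finally show "expectation (\<lambda>\<omega>. (\<Sum>j<n. Et n \<omega> j $ k * Et n \<omega> j $ l - d)\<^sup>2) \<le> 14 * real n * \<sigma>z ^ 4" .
qed

end

context gset begin

lemma C_sq:
  fixes a :: "nat \<Rightarrow> real" and b :: real and k :: 'p
  shows "integrable M (\<lambda>\<omega>. (\<Sum>j<n. et n \<omega> j * (a j + b * Et n \<omega> j $ k))\<^sup>2)"
    and "expectation (\<lambda>\<omega>. (\<Sum>j<n. et n \<omega> j * (a j + b * Et n \<omega> j $ k))\<^sup>2)
         \<le> (\<Sum>j<n. 2 * (a j)\<^sup>2 * \<sigma>\<^sup>2 + 2 * b\<^sup>2 * (3 * \<sigma> ^ 4 + 3 * \<sigma>z ^ 4))"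
proof -
  define Y where "Y j \<omega> = et n \<omega> j * (a j + b * Et n \<omega> j $ k)" for j \<omega>
  define B where "B j \<omega> = 2 * (a j)\<^sup>2 * (et n \<omega> j)\<^sup>2 + 2 * b\<^sup>2 * ((et n \<omega> j) ^ 4 + (Et n \<omega> j $ k) ^ 4)" for j \<omega>
  have Ymeas[measurable]: "Y j \<in> borel_measurable M" for j unfolding Y_def by measurable
  have ptw: "(Y j \<omega>)\<^sup>2 \<le> B j \<omega>" for j \<omega>
  proof -
    have "(Y j \<omega>)\<^sup>2 = (et n \<omega> j)\<^sup>2 * (a j + b * Et n \<omega> j $ k)\<^sup>2"
      by (simp add: Y_def power_mult_distrib)
    also have "\<dots> \<le> (et n \<omega> j)\<^sup>2 * (2 * (a j)\<^sup>2 + 2 * (b * Et n \<omega> j $ k)\<^sup>2)"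
      by (rule mult_left_mono[OF sq_sum_le]) simp
    also have "\<dots> = 2 * (a j)\<^sup>2 * (et n \<omega> j)\<^sup>2 + 2 * b\<^sup>2 * ((et n \<omega> j)\<^sup>2 * (Et n \<omega> j $ k)\<^sup>2)"
      by (simp add: power_mult_distrib algebra_simps)
    also have "\<dots> \<le> 2 * (a j)\<^sup>2 * (et n \<omega> j)\<^sup>2 + 2 * b\<^sup>2 * ((et n \<omega> j) ^ 4 + (Et n \<omega> j $ k) ^ 4)"
      using mult_left_mono[OF sqsq_le[of "et n \<omega> j" "Et n \<omega> j $ k"], of "2 * b\<^sup>2"] by simp
    finally show ?thesis unfolding B_def .
  qed
  have Bint: "integrable M (B j)" if "j < n" for j
    unfolding B_def using Et_ip[OF that] et_ip[OF that] by simp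
  have sq: "integrable M (\<lambda>\<omega>. (Y j \<omega>)\<^sup>2)" if "j < n" for j
    by (rule Bochner_Integration.integrable_bound[OF Bint[OF that]])
       (use ptw in \<open>auto simp: B_def intro!: AE_I2 order_trans[OF _ abs_ge_self]\<close>)
  have pint: "integrable M (\<lambda>\<omega>. et n \<omega> j * Et n \<omega> j $ k)" if "j < n" for j
    by (rule int_prod2) (use Et_ip[OF that] et_ip[OF that] in auto)
  have Yeq: "Y j = (\<lambda>\<omega>. a j * et n \<omega> j + b * (et n \<omega> j * Et n \<omega> j $ k))" for j
    by (auto simp: Y_def algebra_simps)
  have Y_int: "integrable M (Y j)" if "j < n" for j
    unfolding Yeq using pint[OF that] et_ip[OF that, of 1] by simp
  have mean0: "expectation (Y j) = 0" if "j < n" for j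
    unfolding Yeq using pint[OF that] et_ip[OF that, of 1] et_m1[OF that] et_Et_pair[OF that that, of k]
    by simp
  have cross: "expectation (\<lambda>\<omega>. Y i \<omega> * Y j \<omega>) = 0"
    if "i \<in> {..<n}" "j \<in> {..<n}" "i \<noteq> j" for i j
  proof -
    have "expectation (\<lambda>\<omega>. Y i \<omega> * Y j \<omega>) = expectation (Y i) * expectation (Y j)"
    proof (rule indep_cross[where A="Blk i" and B="Blk j"
        and ga="\<lambda>f. f (Inr i) * (a i + b * f (Inl (i, k)))" and gb="\<lambda>f. f (Inr j) * (a j + b * f (Inl (j, k)))"])
      show "Blk i \<inter> Blk j = {}" using that by (simp add: Blk_disj)
      show "Blk i \<subseteq> In n" "Blk j \<subseteq> In n" using that Blk_In by auto
      show "(\<lambda>f. f (Inr i) * (a i + b * f (Inl (i, k)))) \<in> borel_measurable (PiM (Blk i) (\<lambda>_. borel))" by measurable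
      show "(\<lambda>f. f (Inr j) * (a j + b * f (Inl (j, k)))) \<in> borel_measurable (PiM (Blk j) (\<lambda>_. borel))" by measurable
      show "Y i \<omega> = rst n \<omega> (Blk i) (Inr i) * (a i + b * rst n \<omega> (Blk i) (Inl (i, k)))" for \<omega>
        using that by (simp add: Y_def Et_lt et_lt)
      show "Y j \<omega> = rst n \<omega> (Blk j) (Inr j) * (a j + b * rst n \<omega> (Blk j) (Inl (j, k)))" for \<omega>
        using that by (simp add: Y_def Et_lt et_lt)
    qed (use Y_int that in auto)
    then show ?thesis using mean0 that by simp
  qed
  show "integrable M (\<lambda>\<omega>. (\<Sum>j<n. et n \<omega> j * (a j + b * Et n \<omega> j $ k))\<^sup>2)"
    using sum_sq_expect(1)[of "{..<n}" Y] sq cross by (simp add: Y_def)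
  have "expectation (\<lambda>\<omega>. (\<Sum>j<n. Y j \<omega>)\<^sup>2) = (\<Sum>j<n. expectation (\<lambda>\<omega>. (Y j \<omega>)\<^sup>2))"
    by (rule sum_sq_expect(2)) (use sq cross in auto)
  also have "\<dots> \<le> (\<Sum>j<n. 2 * (a j)\<^sup>2 * \<sigma>\<^sup>2 + 2 * b\<^sup>2 * (3 * \<sigma> ^ 4 + 3 * \<sigma>z ^ 4))"
  proof (rule sum_mono)
    fix j assume j: "j \<in> {..<n}"
    have "expectation (\<lambda>\<omega>. (Y j \<omega>)\<^sup>2) \<le> expectation (B j)"
      by (rule integral_mono[OF sq Bint]) (use j ptw in auto)
    also have "expectation (B j) = 2 * (a j)\<^sup>2 * \<sigma>\<^sup>2 + 2 * b\<^sup>2 * (3 * \<sigma> ^ 4 + 3 * \<sigma>z ^ 4)"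
      unfolding B_def using j Et_ip[of j n] et_ip[of j n] by (simp add: Et_m4 et_m4 et_m2)
    finally show "expectation (\<lambda>\<omega>. (Y j \<omega>)\<^sup>2) \<le> 2 * (a j)\<^sup>2 * \<sigma>\<^sup>2 + 2 * b\<^sup>2 * (3 * \<sigma> ^ 4 + 3 * \<sigma>z ^ 4)" .
  qed
  finally show "expectation (\<lambda>\<omega>. (\<Sum>j<n. et n \<omega> j * (a j + b * Et n \<omega> j $ k))\<^sup>2)
         \<le> (\<Sum>j<n. 2 * (a j)\<^sup>2 * \<sigma>\<^sup>2 + 2 * b\<^sup>2 * (3 * \<sigma> ^ 4 + 3 * \<sigma>z ^ 4))"
    by (simp add: Y_def)
qed

lemma D_exp:
  shows "integrable M (\<lambda>\<omega>. \<Sum>j<n. \<Sum>k\<in>UNIV. (Et n \<omega> j $ k)\<^sup>2)"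
    and "expectation (\<lambda>\<omega>. \<Sum>j<n. \<Sum>k\<in>UNIV. (Et n \<omega> j $ k)\<^sup>2) = real n * real CARD('p) * \<sigma>z\<^sup>2"
proof -
  have i: "integrable M (\<lambda>\<omega>. (Et n \<omega> j $ k)\<^sup>2)" if "j \<in> {..<n}" for j k
    using Et_ip[of j n k 2] that by simp
  show "integrable M (\<lambda>\<omega>. \<Sum>j<n. \<Sum>k\<in>UNIV. (Et n \<omega> j $ k)\<^sup>2)"
    using i by (intro Bochner_Integration.integrable_sum) auto
  have "expectation (\<lambda>\<omega>. \<Sum>j<n. \<Sum>k\<in>UNIV. (Et n \<omega> j $ k)\<^sup>2) = (\<Sum>j<n. \<Sum>k\<in>UNIV. expectation (\<lambda>\<omega>. (Et n \<omega> j $ k)\<^sup>2))"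
    using i by (simp add: Bochner_Integration.integral_sum Bochner_Integration.integrable_sum)
  also have "\<dots> = (\<Sum>j<n. \<Sum>k\<in>(UNIV::'p set). \<sigma>z\<^sup>2)"
    by (intro sum.cong refl) (simp add: Et_m2)
  finally show "expectation (\<lambda>\<omega>. \<Sum>j<n. \<Sum>k\<in>UNIV. (Et n \<omega> j $ k)\<^sup>2) = real n * real CARD('p) * \<sigma>z\<^sup>2"
    by simp
qed

lemma Eq_exp:
  fixes w :: "nat \<Rightarrow> real"
  assumes w: "\<And>j. 0 \<le> w j"
  shows "integrable M (\<lambda>\<omega>. \<Sum>j<n. (w j + 2 * (\<Sum>k\<in>UNIV. (Et n \<omega> j $ k)\<^sup>2)) * (et n \<omega> j)\<^sup>2)"
    and "expectation (\<lambda>\<omega>. \<Sum>j<n. (w j + 2 * (\<Sum>k\<in>UNIV. (Et n \<omega> j $ k)\<^sup>2)) * (et n \<omega> j)\<^sup>2)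
       \<le> (\<Sum>j<n. w j * \<sigma>\<^sup>2 + real CARD('p) * (6 * \<sigma>z ^ 4 + 6 * \<sigma> ^ 4))"
proof -
  define F where "F \<omega> = (\<Sum>j<n. (w j + 2 * (\<Sum>k\<in>UNIV. (Et n \<omega> j $ k)\<^sup>2)) * (et n \<omega> j)\<^sup>2)" for \<omega>
  define G where "G \<omega> = (\<Sum>j<n. w j * (et n \<omega> j)\<^sup>2 + (\<Sum>k\<in>(UNIV::'p set). 2 * ((Et n \<omega> j $ k) ^ 4 + (et n \<omega> j) ^ 4)))" for \<omega>
  have Fm[measurable]: "F \<in> borel_measurable M" unfolding F_def by measurable
  have ptw: "F \<omega> \<le> G \<omega>" for \<omega>
    unfolding F_def G_def
  proof (rule sum_mono)
    fix j
    have "(w j + 2 * (\<Sum>k\<in>UNIV. (Et n \<omega> j $ k)\<^sup>2)) * (et n \<omega> j)\<^sup>2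
        = w j * (et n \<omega> j)\<^sup>2 + (\<Sum>k\<in>(UNIV::'p set). 2 * ((Et n \<omega> j $ k)\<^sup>2 * (et n \<omega> j)\<^sup>2))"
      by (simp add: algebra_simps sum_distrib_left sum_distrib_right)
    also have "\<dots> \<le> w j * (et n \<omega> j)\<^sup>2 + (\<Sum>k\<in>(UNIV::'p set). 2 * ((Et n \<omega> j $ k) ^ 4 + (et n \<omega> j) ^ 4))"
      using sqsq_le by (intro add_left_mono sum_mono mult_left_mono) auto
    finally show "(w j + 2 * (\<Sum>k\<in>UNIV. (Et n \<omega> j $ k)\<^sup>2)) * (et n \<omega> j)\<^sup>2
        \<le> w j * (et n \<omega> j)\<^sup>2 + (\<Sum>k\<in>(UNIV::'p set). 2 * ((Et n \<omega> j $ k) ^ 4 + (et n \<omega> j) ^ 4))" .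
  qed
  have Fnn: "0 \<le> F \<omega>" for \<omega> unfolding F_def using w by (intro sum_nonneg mult_nonneg_nonneg add_nonneg_nonneg) auto
  have Gint: "integrable M G"
    unfolding G_def using Et_ip et_ip
    by (intro Bochner_Integration.integrable_sum Bochner_Integration.integrable_add
        Bochner_Integration.integrable_mult_right) auto
  have Fint: "integrable M F"
    by (rule Bochner_Integration.integrable_bound[OF Gint Fm]) (use ptw Fnn in \<open>auto intro!: AE_I2 order_trans[OF _ abs_ge_self]\<close>)
  then show "integrable M (\<lambda>\<omega>. \<Sum>j<n. (w j + 2 * (\<Sum>k\<in>UNIV. (Et n \<omega> j $ k)\<^sup>2)) * (et n \<omega> j)\<^sup>2)"
    unfolding F_def .
  have "expectation F \<le> expectation G"
    by (rule integral_mono[OF Fint Gint ptw])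
  also have "expectation G = (\<Sum>j<n. w j * \<sigma>\<^sup>2 + real CARD('p) * (6 * \<sigma>z ^ 4 + 6 * \<sigma> ^ 4))"
    unfolding G_def using Et_ip et_ip
    by (simp add: Bochner_Integration.integral_sum Bochner_Integration.integrable_sum Et_m4 et_m4 et_m2)
  finally show "expectation (\<lambda>\<omega>. \<Sum>j<n. (w j + 2 * (\<Sum>k\<in>UNIV. (Et n \<omega> j $ k)\<^sup>2)) * (et n \<omega> j)\<^sup>2)
       \<le> (\<Sum>j<n. w j * \<sigma>\<^sup>2 + real CARD('p) * (6 * \<sigma>z ^ 4 + 6 * \<sigma> ^ 4))"
    unfolding F_def .
qed

lemma Mx_exp:
  shows "integrable M (\<lambda>\<omega>. \<Sum>j<n. (\<Sum>k\<in>UNIV. (Et n \<omega> j $ k)\<^sup>2)\<^sup>2)"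
    and "expectation (\<lambda>\<omega>. \<Sum>j<n. (\<Sum>k\<in>UNIV. (Et n \<omega> j $ k)\<^sup>2)\<^sup>2)
       \<le> real n * real CARD('p) * real CARD('p) * (3 * \<sigma>z ^ 4)"
proof -
  define F where "F \<omega> = (\<Sum>j<n. (\<Sum>k\<in>UNIV. (Et n \<omega> j $ k)\<^sup>2)\<^sup>2)" for \<omega>
  define G where "G \<omega> = (\<Sum>j<n. real CARD('p) * (\<Sum>k\<in>(UNIV::'p set). (Et n \<omega> j $ k) ^ 4))" for \<omega>
  have Fm[measurable]: "F \<in> borel_measurable M" unfolding F_def by measurable
  have ptw: "F \<omega> \<le> G \<omega>" for \<omega>
    unfolding F_def G_def
  proof (rule sum_mono)
    fix j
    have "(\<Sum>k\<in>UNIV. 1 * (Et n \<omega> j $ k)\<^sup>2)\<^sup>2 \<le> (\<Sum>k\<in>(UNIV::'p set). 1\<^sup>2) * (\<Sum>k\<in>UNIV. ((Et n \<omega> j $ k)\<^sup>2)\<^sup>2)"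
      by (rule Cauchy_Schwarz_ineq_sum)
    then show "(\<Sum>k\<in>UNIV. (Et n \<omega> j $ k)\<^sup>2)\<^sup>2 \<le> real CARD('p) * (\<Sum>k\<in>(UNIV::'p set). (Et n \<omega> j $ k) ^ 4)"
      by (simp add: power_mult[symmetric])
  qed
  have Fnn: "0 \<le> F \<omega>" for \<omega> unfolding F_def by (intro sum_nonneg) auto
  have Gint: "integrable M G"
    unfolding G_def using Et_ip
    by (intro Bochner_Integration.integrable_sum Bochner_Integration.integrable_mult_right) auto
  have Fint: "integrable M F"
    by (rule Bochner_Integration.integrable_bound[OF Gint Fm]) (use ptw Fnn in \<open>auto intro!: AE_I2 order_trans[OF _ abs_ge_self]\<close>)
  then show "integrable M (\<lambda>\<omega>. \<Sum>j<n. (\<Sum>k\<in>UNIV. (Et n \<omega> j $ k)\<^sup>2)\<^sup>2)"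
    unfolding F_def .
  have "expectation F \<le> expectation G"
    by (rule integral_mono[OF Fint Gint ptw])
  also have "expectation G = real n * real CARD('p) * real CARD('p) * (3 * \<sigma>z ^ 4)"
    unfolding G_def using Et_ip
    by (simp add: Bochner_Integration.integral_sum Bochner_Integration.integrable_sum Et_m4)
  finally show "expectation (\<lambda>\<omega>. \<Sum>j<n. (\<Sum>k\<in>UNIV. (Et n \<omega> j $ k)\<^sup>2)\<^sup>2)
       \<le> real n * real CARD('p) * real CARD('p) * (3 * \<sigma>z ^ 4)"
    unfolding F_def .
qed

end

lemma vm_scale: "(c *\<^sub>R x) v* (A::real^'b^'a) = c *\<^sub>R (x v* A)"
  by (simp add: vec_eq_iff vector_matrix_mult_def sum_distrib_left mult.assoc)

lemma vm_sum: "(\<Sum>j\<in>S. x j) v* (A::real^'b^'a) = (\<Sum>j\<in>S. x j v* A)"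
  by (induction S rule: infinite_finite_induct) (auto simp: vector_matrix_left_distrib)

lemma vm_bound: "norm (x v* (A::real^'b^'a)) \<le> (\<Sum>e\<in>UNIV. \<Sum>k\<in>UNIV. \<bar>A $ e $ k\<bar>) * norm x"
proof -
  have "norm (x v* A) \<le> (\<Sum>k\<in>UNIV. \<bar>(x v* A) $ k\<bar>)" by (rule norm_le_l1_cart)
  also have "\<dots> \<le> (\<Sum>k\<in>UNIV. \<Sum>e\<in>UNIV. \<bar>A $ e $ k\<bar> * norm x)"
  proof (rule sum_mono)
    fix k
    have "\<bar>(x v* A) $ k\<bar> = \<bar>\<Sum>e\<in>UNIV. x $ e * A $ e $ k\<bar>" by (simp add: vector_matrix_mult_def)
    also have "\<dots> \<le> (\<Sum>e\<in>UNIV. \<bar>x $ e * A $ e $ k\<bar>)" by (rule sum_abs)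
    also have "\<dots> \<le> (\<Sum>e\<in>UNIV. \<bar>A $ e $ k\<bar> * norm x)"
    proof (rule sum_mono)
      fix e
      have "\<bar>x $ e\<bar> * \<bar>A $ e $ k\<bar> \<le> norm x * \<bar>A $ e $ k\<bar>"
        by (rule mult_right_mono[OF component_le_norm_cart]) simp
      then show "\<bar>x $ e * A $ e $ k\<bar> \<le> \<bar>A $ e $ k\<bar> * norm x" by (simp add: abs_mult mult.commute)
    qed
    finally show "\<bar>(x v* A) $ k\<bar> \<le> (\<Sum>e\<in>UNIV. \<bar>A $ e $ k\<bar> * norm x)" .
  qed
  also have "\<dots> = (\<Sum>e\<in>UNIV. \<Sum>k\<in>UNIV. \<bar>A $ e $ k\<bar>) * norm x"
    by (subst sum.swap) (simp add: sum_distrib_right)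
  finally show ?thesis .
qed

locale msetting = gset M E \<epsilon> \<sigma> \<sigma>z
  for M :: "'w measure" and E :: "nat \<Rightarrow> 'w \<Rightarrow> nat \<Rightarrow> real^'p" and \<epsilon> \<sigma> \<sigma>z +
  fixes X :: "nat \<Rightarrow> nat \<Rightarrow> real^'e" and \<Gamma> :: "real^'p^'e"
    and lam :: "nat \<Rightarrow> real" and \<beta>0 :: "nat \<Rightarrow> real^'e"
    and \<alpha>0 :: "real^'e" and \<Sigma> :: "real^'e^'e" and \<Theta> :: "real^'e"
  assumes lam_nonneg: "\<And>n. lam n \<ge> 0"
    and alpha: "(\<lambda>n. sqrt (real n) *\<^sub>R \<beta>0 n) \<longlonglongrightarrow> \<alpha>0"
    and Sigma: "(\<lambda>n. (1 / real n) *\<^sub>R (\<Sum>i<n. outerp (X n i))) \<longlonglongrightarrow> \<Sigma>"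
    and Theta: "(\<lambda>n. (1 / real n) *\<^sub>R (\<Sum>i<n. X n i)) \<longlonglongrightarrow> \<Theta>"
    and maxrow: "(\<lambda>n. (MAX i\<in>{..<n}. norm (X n i)) / real n powr (1/3)) \<longlonglongrightarrow> 0"
begin

definition "gG = (\<Sum>e\<in>UNIV. \<Sum>k\<in>UNIV. \<bar>\<Gamma> $ e $ k\<bar>)"
definition "mm n j = X n j v* \<Gamma>"

lemma gG_nonneg: "0 \<le> gG" unfolding gG_def by (intro sum_nonneg) auto

lemma mm_bound: "norm (mm n j) \<le> gG * norm (X n j)"
  unfolding mm_def gG_def by (rule vm_bound)

lemma mm_bound2: "(norm (mm n j))\<^sup>2 \<le> gG\<^sup>2 * (norm (X n j))\<^sup>2"
  using power_mono[OF mm_bound[of n j], of 2] by (simp add: power_mult_distrib)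

lemma D1: "\<exists>Cx\<ge>0. eventually (\<lambda>n. (\<Sum>i<n. (norm (X n i))\<^sup>2) \<le> Cx * real n) sequentially"
proof -
  let ?L = "\<Sum>e\<in>UNIV. \<Sigma> $ e $ e"
  have lim: "(\<lambda>n. \<Sum>e\<in>UNIV. ((1 / real n) *\<^sub>R (\<Sum>i<n. outerp (X n i))) $ e $ e) \<longlonglongrightarrow> ?L"
    by (intro tendsto_sum tendsto_vec_nth Sigma)
  have eq: "(\<Sum>e\<in>UNIV. ((1 / real n) *\<^sub>R (\<Sum>i<n. outerp (X n i))) $ e $ e) = (\<Sum>i<n. (norm (X n i))\<^sup>2) / real n" for n
  proof -
    have "((1 / real n) *\<^sub>R (\<Sum>i<n. outerp (X n i))) $ e $ e = (\<Sum>i<n. (X n i $ e)\<^sup>2) / real n" for e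
      by (simp add: outerp_def power2_eq_square)
    then have "(\<Sum>e\<in>UNIV. ((1 / real n) *\<^sub>R (\<Sum>i<n. outerp (X n i))) $ e $ e) = (\<Sum>e\<in>UNIV. \<Sum>i<n. (X n i $ e)\<^sup>2) / real n"
      by (simp add: sum_divide_distrib)
    also have "(\<Sum>e\<in>UNIV. \<Sum>i<n. (X n i $ e)\<^sup>2) = (\<Sum>i<n. (norm (X n i))\<^sup>2)"
      by (subst sum.swap) (simp add: norm2_vec)
    finally show ?thesis .
  qed
  have "eventually (\<lambda>n. (\<Sum>i<n. (norm (X n i))\<^sup>2) / real n < \<bar>?L\<bar> + 1) sequentially"
    using order_tendstoD(2)[OF lim, of "\<bar>?L\<bar> + 1"] unfolding eq by simp
  moreover have "eventually (\<lambda>n. n > (0::nat)) sequentially" by (rule eventually_gt_at_top)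
  ultimately have "eventually (\<lambda>n. (\<Sum>i<n. (norm (X n i))\<^sup>2) \<le> (\<bar>?L\<bar> + 1) * real n) sequentially"
    by eventually_elim (simp add: field_simps)
  then show ?thesis by (intro exI[of _ "\<bar>?L\<bar> + 1"]) simp
qed

lemma D2: "eventually (\<lambda>n. norm ((1 / real n) *\<^sub>R (\<Sum>i<n. X n i)) \<le> norm \<Theta> + 1) sequentially"
  using order_tendstoD(2)[OF tendsto_norm[OF Theta], of "norm \<Theta> + 1"] by (auto elim: eventually_mono)

lemma D3: "\<exists>B. eventually (\<lambda>n. (\<Sum>i<n. (X n i \<bullet> \<beta>0 n)\<^sup>2) \<le> B) sequentially"
proof -
  let ?L = "\<Sum>e\<in>UNIV. \<Sum>f\<in>UNIV. \<alpha>0 $ e * \<alpha>0 $ f * \<Sigma> $ e $ f"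
  have lim: "(\<lambda>n. \<Sum>e\<in>UNIV. \<Sum>f\<in>UNIV. (sqrt (real n) *\<^sub>R \<beta>0 n) $ e * (sqrt (real n) *\<^sub>R \<beta>0 n) $ f
              * ((1 / real n) *\<^sub>R (\<Sum>i<n. outerp (X n i))) $ e $ f) \<longlonglongrightarrow> ?L"
    by (intro tendsto_sum tendsto_mult tendsto_vec_nth Sigma alpha)
  have eq: "(\<Sum>e\<in>UNIV. \<Sum>f\<in>UNIV. (sqrt (real n) *\<^sub>R \<beta>0 n) $ e * (sqrt (real n) *\<^sub>R \<beta>0 n) $ f
              * ((1 / real n) *\<^sub>R (\<Sum>i<n. outerp (X n i))) $ e $ f) = (\<Sum>i<n. (X n i \<bullet> \<beta>0 n)\<^sup>2)"
    if n: "n > 0" for n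
  proof -
    have "(\<Sum>i<n. (X n i \<bullet> \<beta>0 n)\<^sup>2) = (\<Sum>i<n. \<Sum>e\<in>UNIV. \<Sum>f\<in>UNIV. \<beta>0 n $ e * \<beta>0 n $ f * (X n i $ e * X n i $ f))"
      by (simp add: inner_vec_def power2_eq_square sum_product mult_ac)
    also have "\<dots> = (\<Sum>e\<in>UNIV. \<Sum>f\<in>UNIV. \<beta>0 n $ e * \<beta>0 n $ f * (\<Sum>i<n. X n i $ e * X n i $ f))"
      by (simp add: sum_distrib_left sum.swap[of _ "{..<n}"])
    also have "\<dots> = (\<Sum>e\<in>UNIV. \<Sum>f\<in>UNIV. (sqrt (real n) *\<^sub>R \<beta>0 n) $ e * (sqrt (real n) *\<^sub>R \<beta>0 n) $ f
              * ((1 / real n) *\<^sub>R (\<Sum>i<n. outerp (X n i))) $ e $ f)"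
      using n by (intro sum.cong refl) (simp add: outerp_def field_simps)
    finally show ?thesis by simp
  qed
  have ev1: "eventually (\<lambda>n. (\<Sum>e\<in>UNIV. \<Sum>f\<in>UNIV. (sqrt (real n) *\<^sub>R \<beta>0 n) $ e * (sqrt (real n) *\<^sub>R \<beta>0 n) $ f
              * ((1 / real n) *\<^sub>R (\<Sum>i<n. outerp (X n i))) $ e $ f) < ?L + 1) sequentially"
    by (rule order_tendstoD(2)[OF lim]) simp
  have "eventually (\<lambda>n. (\<Sum>i<n. (X n i \<bullet> \<beta>0 n)\<^sup>2) < ?L + 1) sequentially"
    using ev1 eventually_gt_at_top[of 0] by eventually_elim (simp only: eq[symmetric])
  then show ?thesis by (intro exI[of _ "?L + 1"]) (auto elim: eventually_mono)
qed

lemma D4: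
  assumes r: "r > 0"
  shows "eventually (\<lambda>n. \<forall>j<n. (norm (X n j))\<^sup>2 \<le> r * real n) sequentially"
proof -
  have "eventually (\<lambda>n. (MAX i\<in>{..<n}. norm (X n i)) / real n powr (1/3) < sqrt r) sequentially"
    using order_tendstoD(2)[OF maxrow, of "sqrt r"] r by simp
  then show ?thesis using eventually_gt_at_top[of 0]
  proof eventually_elim
    case (elim n)
    show ?case
    proof (intro allI impI)
      fix j assume j: "j < n"
      have np: "real n powr (1/3) > 0" using elim by simp
      have "norm (X n j) \<le> (MAX i\<in>{..<n}. norm (X n i))" using j by (intro Max_ge) auto
      also have "\<dots> < sqrt r * real n powr (1/3)" using elim(1) np by (simp add: field_simps)
      also have "\<dots> \<le> sqrt r * real n powr (1/2)"
        using elim(2) r by (intro mult_left_mono powr_mono) auto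
      also have "\<dots> = sqrt (r * real n)" by (simp add: powr_half_sqrt real_sqrt_mult)
      finally have "norm (X n j) \<le> sqrt (r * real n)" by simp
      then have "(norm (X n j))\<^sup>2 \<le> (sqrt (r * real n))\<^sup>2" by (rule power_mono) simp
      then show "(norm (X n j))\<^sup>2 \<le> r * real n" using r by simp
    qed
  qed
qed

end

context msetting begin

definition "Qv n \<omega> = (\<Sum>l\<in>UNIV. (\<Sum>j<n. Et n \<omega> j $ l)\<^sup>2)
   + (\<Sum>k\<in>UNIV. \<Sum>l\<in>UNIV. (\<Sum>j<n. mm n j $ k * Et n \<omega> j $ l)\<^sup>2)
   + (\<Sum>k\<in>UNIV. \<Sum>l\<in>UNIV. (\<Sum>j<n. Et n \<omega> j $ k * Et n \<omega> j $ l - (if k = l then \<sigma>z\<^sup>2 else 0))\<^sup>2)"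

definition "Mx n \<omega> = (\<Sum>j<n. (\<Sum>k\<in>UNIV. (Et n \<omega> j $ k)\<^sup>2)\<^sup>2)"

definition "Rv n \<omega> = (\<Sum>j<n. et n \<omega> j)\<^sup>2
   + (\<Sum>k\<in>UNIV. (\<Sum>j<n. et n \<omega> j * (mm n j $ k + Et n \<omega> j $ k))\<^sup>2)
   + (\<Sum>j<n. \<Sum>k\<in>UNIV. (Et n \<omega> j $ k)\<^sup>2)
   + (\<Sum>j<n. (1 + 2 * (norm (mm n j))\<^sup>2 + 2 * (\<Sum>k\<in>UNIV. (Et n \<omega> j $ k)\<^sup>2)) * (et n \<omega> j)\<^sup>2)"

lemma Qv_meas[measurable]: "Qv n \<in> borel_measurable M"
  unfolding Qv_def by measurable
lemma Mx_meas[measurable]: "Mx n \<in> borel_measurable M"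
  unfolding Mx_def by measurable
lemma Rv_meas[measurable]: "Rv n \<in> borel_measurable M"
  unfolding Rv_def by measurable

lemma Qv_nonneg: "0 \<le> Qv n \<omega>" unfolding Qv_def by (intro add_nonneg_nonneg sum_nonneg) auto
lemma Mx_nonneg: "0 \<le> Mx n \<omega>" unfolding Mx_def by (intro sum_nonneg) auto
lemma Rv_nonneg: "0 \<le> Rv n \<omega>" unfolding Rv_def
  by (intro add_nonneg_nonneg sum_nonneg mult_nonneg_nonneg) auto

lemma Qv_int_exp:
  "integrable M (Qv n) \<and> expectation (Qv n)
     \<le> real n * real CARD('p) * \<sigma>z\<^sup>2 + real CARD('p) * \<sigma>z\<^sup>2 * (\<Sum>j<n. (norm (mm n j))\<^sup>2)
       + 14 * real n * real CARD('p) * real CARD('p) * \<sigma>z ^ 4"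
proof -
  define U where "U l \<omega> = (\<Sum>j<n. Et n \<omega> j $ l)\<^sup>2" for l \<omega>
  define V where "V k l \<omega> = (\<Sum>j<n. mm n j $ k * Et n \<omega> j $ l)\<^sup>2" for k l \<omega>
  define S where "S k l \<omega> = (\<Sum>j<n. Et n \<omega> j $ k * Et n \<omega> j $ l - (if k = l then \<sigma>z\<^sup>2 else 0))\<^sup>2" for k l \<omega>
  have U1: "(\<lambda>\<omega>. (\<Sum>j<n. Et n \<omega> j $ l)\<^sup>2) = (\<lambda>\<omega>. (\<Sum>j<n. 1 * Et n \<omega> j $ l)\<^sup>2)" for l by simp
  have Ui: "integrable M (U l)" and Ue: "expectation (U l) = real n * \<sigma>z\<^sup>2" for l
    using lin_sq[where c="\<lambda>_. 1" and n=n and l=l] unfolding U_def U1 by auto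
  have Vi: "integrable M (V k l)" and Ve: "expectation (V k l) = \<sigma>z\<^sup>2 * (\<Sum>j<n. (mm n j $ k)\<^sup>2)" for k l
    using lin_sq[where c="\<lambda>j. mm n j $ k" and n=n and l=l] unfolding V_def by auto
  have Si: "integrable M (S k l)" and Se: "expectation (S k l) \<le> 14 * real n * \<sigma>z ^ 4" for k l
    using S_sq[where k=k and l=l and n=n] unfolding S_def by auto
  have Qeq: "Qv n = (\<lambda>\<omega>. (\<Sum>l\<in>UNIV. U l \<omega>) + (\<Sum>k\<in>UNIV. \<Sum>l\<in>UNIV. V k l \<omega>) + (\<Sum>k\<in>UNIV. \<Sum>l\<in>UNIV. S k l \<omega>))"
    by (simp add: Qv_def U_def V_def S_def fun_eq_iff)
  have int: "integrable M (Qv n)" unfolding Qeq using Ui Vi Si by simp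
  have "expectation (Qv n) = (\<Sum>l\<in>UNIV. expectation (U l)) + (\<Sum>k\<in>UNIV. \<Sum>l\<in>UNIV. expectation (V k l))
        + (\<Sum>k\<in>UNIV. \<Sum>l\<in>UNIV. expectation (S k l))"
    unfolding Qeq using Ui Vi Si
    by (simp add: Bochner_Integration.integral_sum Bochner_Integration.integrable_sum)
  also have "\<dots> \<le> (\<Sum>l\<in>(UNIV::'p set). real n * \<sigma>z\<^sup>2) + (\<Sum>k\<in>UNIV. \<Sum>l\<in>(UNIV::'p set). \<sigma>z\<^sup>2 * (\<Sum>j<n. (mm n j $ k)\<^sup>2))
        + (\<Sum>k\<in>(UNIV::'p set). \<Sum>l\<in>(UNIV::'p set). 14 * real n * \<sigma>z ^ 4)"
    unfolding Ue Ve by (intro add_mono order_refl sum_mono Se)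
  also have "(\<Sum>k\<in>UNIV. \<Sum>l\<in>(UNIV::'p set). \<sigma>z\<^sup>2 * (\<Sum>j<n. (mm n j $ k)\<^sup>2))
           = real CARD('p) * \<sigma>z\<^sup>2 * (\<Sum>j<n. (norm (mm n j))\<^sup>2)"
    by (simp add: norm2_vec sum_distrib_left sum.swap[of _ UNIV] mult_ac)
  finally show ?thesis using int by (simp add: mult_ac)
qed

lemma Mx_int_exp:
  "integrable M (Mx n) \<and> expectation (Mx n) \<le> real n * real CARD('p) * real CARD('p) * (3 * \<sigma>z ^ 4)"
  using Mx_exp[where n=n] unfolding Mx_def by auto

lemma Rv_int_exp:
  "integrable M (Rv n) \<and> expectation (Rv n)
     \<le> real n * (3 * \<sigma>\<^sup>2 + real CARD('p) * \<sigma>z\<^sup>2 + 12 * real CARD('p) * (\<sigma> ^ 4 + \<sigma>z ^ 4))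
       + 4 * \<sigma>\<^sup>2 * (\<Sum>j<n. (norm (mm n j))\<^sup>2)"
proof -
  define A1 where "A1 \<omega> = (\<Sum>j<n. et n \<omega> j * (1 + 0 * Et n \<omega> j $ undefined))\<^sup>2" for \<omega>
  define A2 where "A2 k \<omega> = (\<Sum>j<n. et n \<omega> j * (mm n j $ k + 1 * Et n \<omega> j $ k))\<^sup>2" for k \<omega>
  define A3 where "A3 \<omega> = (\<Sum>j<n. \<Sum>k\<in>UNIV. (Et n \<omega> j $ k)\<^sup>2)" for \<omega>
  define A4 where "A4 \<omega> = (\<Sum>j<n. (1 + 2 * (norm (mm n j))\<^sup>2 + 2 * (\<Sum>k\<in>UNIV. (Et n \<omega> j $ k)\<^sup>2)) * (et n \<omega> j)\<^sup>2)" for \<omega>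
  have Req: "Rv n = (\<lambda>\<omega>. A1 \<omega> + (\<Sum>k\<in>UNIV. A2 k \<omega>) + A3 \<omega> + A4 \<omega>)"
    by (simp add: Rv_def A1_def A2_def A3_def A4_def fun_eq_iff)
  have A1i: "integrable M A1" and A1e: "expectation A1 \<le> (\<Sum>j<n. 2 * 1\<^sup>2 * \<sigma>\<^sup>2 + 2 * 0\<^sup>2 * (3 * \<sigma> ^ 4 + 3 * \<sigma>z ^ 4))"
    using C_sq[where a="\<lambda>_. 1" and b=0 and n=n and k=undefined] unfolding A1_def by auto
  have A2i: "integrable M (A2 k)" and A2e: "expectation (A2 k) \<le> (\<Sum>j<n. 2 * (mm n j $ k)\<^sup>2 * \<sigma>\<^sup>2 + 2 * 1\<^sup>2 * (3 * \<sigma> ^ 4 + 3 * \<sigma>z ^ 4))" for k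
    using C_sq[where a="\<lambda>j. mm n j $ k" and b=1 and n=n and k=k] unfolding A2_def by auto
  have A3i: "integrable M A3" and A3e: "expectation A3 = real n * real CARD('p) * \<sigma>z\<^sup>2"
    using D_exp[where n=n] unfolding A3_def by auto
  have A4i: "integrable M A4" and A4e: "expectation A4 \<le> (\<Sum>j<n. (1 + 2 * (norm (mm n j))\<^sup>2) * \<sigma>\<^sup>2 + real CARD('p) * (6 * \<sigma>z ^ 4 + 6 * \<sigma> ^ 4))"
    using Eq_exp[where w="\<lambda>j. 1 + 2 * (norm (mm n j))\<^sup>2" and n=n] unfolding A4_def by (auto simp: add_nonneg_nonneg)
  have int: "integrable M (Rv n)" unfolding Req using A1i A2i A3i A4i by simp
  have "expectation (Rv n) = expectation A1 + (\<Sum>k\<in>UNIV. expectation (A2 k)) + expectation A3 + expectation A4"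
    unfolding Req using A1i A2i A3i A4i
    by (simp add: Bochner_Integration.integral_sum Bochner_Integration.integrable_sum)
  also have "\<dots> \<le> (\<Sum>j<n. 2 * 1\<^sup>2 * \<sigma>\<^sup>2 + 2 * 0\<^sup>2 * (3 * \<sigma> ^ 4 + 3 * \<sigma>z ^ 4))
       + (\<Sum>k\<in>UNIV. \<Sum>j<n. 2 * (mm n j $ k)\<^sup>2 * \<sigma>\<^sup>2 + 2 * 1\<^sup>2 * (3 * \<sigma> ^ 4 + 3 * \<sigma>z ^ 4))
       + real n * real CARD('p) * \<sigma>z\<^sup>2
       + (\<Sum>j<n. (1 + 2 * (norm (mm n j))\<^sup>2) * \<sigma>\<^sup>2 + real CARD('p) * (6 * \<sigma>z ^ 4 + 6 * \<sigma> ^ 4))"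
    unfolding A3e by (intro add_mono order_refl sum_mono A1e A2e A4e)
  also have "\<dots> = real n * (3 * \<sigma>\<^sup>2 + real CARD('p) * \<sigma>z\<^sup>2 + 12 * real CARD('p) * (\<sigma> ^ 4 + \<sigma>z ^ 4))
       + 4 * \<sigma>\<^sup>2 * (\<Sum>j<n. (norm (mm n j))\<^sup>2)"
  proof -
    have "(\<Sum>k\<in>(UNIV::'p set). \<Sum>j<n. 2 * (mm n j $ k)\<^sup>2 * \<sigma>\<^sup>2 + 2 * 1\<^sup>2 * (3 * \<sigma> ^ 4 + 3 * \<sigma>z ^ 4))
        = 2 * \<sigma>\<^sup>2 * (\<Sum>j<n. (norm (mm n j))\<^sup>2) + real CARD('p) * real n * (6 * \<sigma> ^ 4 + 6 * \<sigma>z ^ 4)"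
      by (simp add: sum.distrib norm2_vec sum_distrib_left sum.swap[of _ UNIV] mult_ac)
    moreover have "(\<Sum>j<n. (1 + 2 * (norm (mm n j))\<^sup>2) * \<sigma>\<^sup>2 + real CARD('p) * (6 * \<sigma>z ^ 4 + 6 * \<sigma> ^ 4))
        = real n * \<sigma>\<^sup>2 + 2 * \<sigma>\<^sup>2 * (\<Sum>j<n. (norm (mm n j))\<^sup>2) + real n * real CARD('p) * (6 * \<sigma>z ^ 4 + 6 * \<sigma> ^ 4)"
      by (simp add: sum.distrib sum_distrib_left algebra_simps)
    ultimately show ?thesis by (simp add: algebra_simps)
  qed
  finally show ?thesis using int by simp
qed

lemma prob_ge:
  assumes "integrable M u" "\<And>\<omega>. 0 \<le> u \<omega>" "t > 0" "expectation u \<le> C"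
  shows "prob {\<omega>\<in>space M. t \<le> u \<omega>} \<le> C / t"
  using markov[OF assms(1-3)] divide_right_mono[OF assms(4), of t] assms(3) by linarith

end

lemma ridge_coef_cong:
  assumes "\<And>j. j \<in> S \<Longrightarrow> z j = z' j" "\<And>j. j \<in> S \<Longrightarrow> r j = r' j"
  shows "ridge_coef lam z r S = ridge_coef lam z' r' S"
  unfolding ridge_coef_def using assms by (simp cong: sum.cong)

lemma ridge_coef_add:
  "ridge_coef lam z r1 S + ridge_coef lam z r2 S = ridge_coef lam z (\<lambda>j. r1 j + r2 j) S"
  unfolding ridge_coef_def
  by (simp add: matrix_vector_right_distrib[symmetric] scaleR_add_left sum.distrib)

lemma norm2_add_le: "(norm (x + y :: real^'n))\<^sup>2 \<le> 2 * (norm x)\<^sup>2 + 2 * (norm y)\<^sup>2"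
proof -
  have "(norm (x + y))\<^sup>2 \<le> (norm x + norm y)\<^sup>2" by (rule power_mono[OF norm_triangle_ineq]) simp
  also have "\<dots> \<le> 2 * (norm x)\<^sup>2 + 2 * (norm y)\<^sup>2" by (rule sq_sum_le')
  finally show ?thesis .
qed

lemma sq_lt_imp: "(x::real)\<^sup>2 \<le> Q \<Longrightarrow> Q < t\<^sup>2 \<Longrightarrow> 0 \<le> t \<Longrightarrow> \<bar>x\<bar> \<le> t"
  by (metis abs_le_square_iff abs_of_nonneg less_le_not_le linorder_le_less_linear order_trans)

context msetting begin

definition "zt n \<omega> j = aug (mm n j + Et n \<omega> j)"
definition "sv n j = X n j \<bullet> \<beta>0 n"
definition "yh n \<omega> i = zt n \<omega> i \<bullet> ridge_coef (lam n) (zt n \<omega>) (\<lambda>j. sv n j + et n \<omega> j) {..<n}"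
definition "yt n \<omega> i = zt n \<omega> i \<bullet> ridge_coef (lam n) (zt n \<omega>) (\<lambda>j. sv n j + et n \<omega> j) ({..<n} - {i})"

lemma zt_norm2: "(norm (zt n \<omega> j))\<^sup>2 \<le> 1 + 2 * (norm (mm n j))\<^sup>2 + 2 * (\<Sum>k\<in>UNIV. (Et n \<omega> j $ k)\<^sup>2)"
  using norm2_add_le[of "mm n j" "Et n \<omega> j"] by (simp add: zt_def norm2_aug norm2_vec[of "Et n \<omega> j"])

lemma ytil_eq:
  assumes "i < n"
  shows "aug (X n i v* \<Gamma> + E n \<omega> i) \<bullet>
            ridge_coef (lam n) (\<lambda>j. aug (X n j v* \<Gamma> + E n \<omega> j)) (\<lambda>j. X n j \<bullet> \<beta>0 n + \<epsilon> n \<omega> j) ({..<n} - {i})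
         = yt n \<omega> i"
proof -
  have "ridge_coef (lam n) (\<lambda>j. aug (X n j v* \<Gamma> + E n \<omega> j)) (\<lambda>j. X n j \<bullet> \<beta>0 n + \<epsilon> n \<omega> j) ({..<n} - {i})
      = ridge_coef (lam n) (zt n \<omega>) (\<lambda>j. sv n j + et n \<omega> j) ({..<n} - {i})"
    by (rule ridge_coef_cong) (auto simp: zt_def mm_def sv_def Et_lt et_lt)
  then show ?thesis using assms by (simp add: yt_def zt_def mm_def Et_lt)
qed

lemma yprime_eq:
  assumes "i < n"
  shows "aug (X n i v* \<Gamma> + E n \<omega> i) \<bullet>
            ridge_coef (lam n) (\<lambda>j. aug (X n j v* \<Gamma> + E n \<omega> j)) (\<lambda>j. X n j \<bullet> \<beta>0 n) {..<n}
          + aug (X n i v* \<Gamma> + E n \<omega> i) \<bullet> ridge_coef (lam n) (\<lambda>j. aug (X n j v* \<Gamma> + E n \<omega> j)) (\<epsilon> n \<omega>) {..<n}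
         = yh n \<omega> i"
proof -
  have "ridge_coef (lam n) (\<lambda>j. aug (X n j v* \<Gamma> + E n \<omega> j)) (\<lambda>j. X n j \<bullet> \<beta>0 n) {..<n}
      + ridge_coef (lam n) (\<lambda>j. aug (X n j v* \<Gamma> + E n \<omega> j)) (\<epsilon> n \<omega>) {..<n}
      = ridge_coef (lam n) (\<lambda>j. aug (X n j v* \<Gamma> + E n \<omega> j)) (\<lambda>j. X n j \<bullet> \<beta>0 n + \<epsilon> n \<omega> j) {..<n}"
    by (rule ridge_coef_add)
  also have "\<dots> = ridge_coef (lam n) (zt n \<omega>) (\<lambda>j. sv n j + et n \<omega> j) {..<n}"
    by (rule ridge_coef_cong) (auto simp: zt_def mm_def sv_def Et_lt et_lt)
  finally show ?thesis using assms by (simp add: yh_def zt_def mm_def Et_lt inner_add_right[symmetric])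
qed

end

context msetting begin

lemma good:
  fixes n :: nat and Mb Cm B K \<rho> :: real
  defines "c0 \<equiv> min (\<sigma>z\<^sup>2 / (4 * (Mb\<^sup>2 + \<sigma>z\<^sup>2))) (\<sigma>z\<^sup>2 / 2)"
    and "\<tau> \<equiv> min (\<sigma>z\<^sup>2 / (4 * (Mb\<^sup>2 + \<sigma>z\<^sup>2))) (\<sigma>z\<^sup>2 / 2) / (2 * (2 * real CARD('p) + 3 * real CARD('p) * real CARD('p)))"
  assumes n: "n > 0" and Mb: "0 \<le> Mb"
    and ub: "norm ((1 / real n) *\<^sub>R (\<Sum>j<n. mm n j)) \<le> Mb"
    and Cm: "(\<Sum>j<n. (norm (mm n j))\<^sup>2) \<le> Cm * real n"
    and Bs: "(\<Sum>j<n. (sv n j)\<^sup>2) \<le> B"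
    and mmx: "\<forall>j<n. (norm (mm n j))\<^sup>2 \<le> \<rho> / 8 * real n"
    and n1: "1 \<le> \<rho> / 4 * real n"
    and rho: "0 < \<rho>" "\<rho> \<le> c0 / 4"
    and Qg: "Qv n \<omega> < (\<tau> * real n)\<^sup>2"
    and Mg: "Mx n \<omega> < (\<rho> / 8 * real n)\<^sup>2"
    and Rg: "Rv n \<omega> < K * real n"
  shows "(\<Sum>i<n. (yh n \<omega> i)\<^sup>2) \<le> (2 * B * (1 + 2 * Cm + 2 * K) + 2 * K) / (c0 / 2)"
    and "(\<Sum>i<n. (yt n \<omega> i - yh n \<omega> i)\<^sup>2)
       \<le> 2 * (2 * \<rho> / (c0 / 2))\<^sup>2 * ((2 * B * (1 + 2 * Cm + 2 * K) + 2 * K) / (c0 / 2))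
         + 4 * (2 * \<rho> / (c0 / 2))\<^sup>2 * B + 8 * (2 * \<rho> / (c0 / 2)) * K / (c0 / 2)"
proof -
  define p where "p = real CARD('p)"
  have p: "0 < p" unfolding p_def by simp
  have c0: "0 < c0" unfolding c0_def using sigz Mb by (simp add: add_nonneg_pos)
  have tau_eq: "\<tau> = c0 / (2 * (2 * p + 3 * p * p))" unfolding \<tau>_def c0_def p_def ..
  have tau: "0 \<le> \<tau>" unfolding tau_eq using c0 p by simp
  have tn: "0 \<le> \<tau> * real n" using tau by simp
  define U where "U l = (\<Sum>j<n. Et n \<omega> j $ l)" for l
  define V where "V k l = (\<Sum>j<n. mm n j $ k * Et n \<omega> j $ l)" for k l
  define S where "S k l = (\<Sum>j<n. Et n \<omega> j $ k * Et n \<omega> j $ l - (if k = l then \<sigma>z\<^sup>2 else 0))" for k l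
  have Qeq: "Qv n \<omega> = (\<Sum>l\<in>UNIV. (U l)\<^sup>2) + (\<Sum>k\<in>UNIV. \<Sum>l\<in>UNIV. (V k l)\<^sup>2) + (\<Sum>k\<in>UNIV. \<Sum>l\<in>UNIV. (S k l)\<^sup>2)"
    by (simp add: Qv_def U_def V_def S_def)
  have dsum_le: "(f k l)\<^sup>2 \<le> (\<Sum>k\<in>UNIV. \<Sum>l\<in>UNIV. (f k l)\<^sup>2)" for f :: "'p \<Rightarrow> 'p \<Rightarrow> real" and k l
  proof -
    have "(f k l)\<^sup>2 \<le> (\<Sum>l\<in>UNIV. (f k l)\<^sup>2)" by (rule member_le_sum) auto
    also have "\<dots> \<le> (\<Sum>k\<in>UNIV. \<Sum>l\<in>UNIV. (f k l)\<^sup>2)" by (rule member_le_sum) (auto intro: sum_nonneg)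
    finally show ?thesis .
  qed
  have Ub: "\<bar>U l\<bar> \<le> \<tau> * real n" for l
  proof -
    have "(U l)\<^sup>2 \<le> (\<Sum>l\<in>UNIV. (U l)\<^sup>2)" by (rule member_le_sum) auto
    also have "\<dots> \<le> Qv n \<omega>" unfolding Qeq by (simp add: sum_nonneg add_increasing2)
    finally show ?thesis using Qg tn by (rule sq_lt_imp)
  qed
  have Vb: "\<bar>V k l\<bar> \<le> \<tau> * real n" for k l
  proof -
    have "(V k l)\<^sup>2 \<le> Qv n \<omega>" unfolding Qeq using dsum_le[of V k l]
      by (smt (verit) sum_nonneg zero_le_power2)
    then show ?thesis using Qg tn by (rule sq_lt_imp)
  qed
  have Sb: "\<bar>S k l\<bar> \<le> \<tau> * real n" for k l
  proof -
    have "(S k l)\<^sup>2 \<le> Qv n \<omega>" unfolding Qeq using dsum_le[of S k l]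
      by (smt (verit) sum_nonneg zero_le_power2)
    then show ?thesis using Qg tn by (rule sq_lt_imp)
  qed
  have err: "2 * (\<Sum>l\<in>UNIV. \<bar>U l\<bar>) + 2 * (\<Sum>k\<in>UNIV. \<Sum>l\<in>UNIV. \<bar>V k l\<bar>) + (\<Sum>k\<in>UNIV. \<Sum>l\<in>UNIV. \<bar>S k l\<bar>)
      \<le> c0 * real n / 2"
  proof -
    have "(\<Sum>l\<in>UNIV. \<bar>U l\<bar>) \<le> p * (\<tau> * real n)"
      unfolding p_def using Ub by (intro order_trans[OF sum_bounded_above]) auto
    moreover have "(\<Sum>k\<in>UNIV. \<Sum>l\<in>UNIV. \<bar>V k l\<bar>) \<le> p * (p * (\<tau> * real n))"
      unfolding p_def using Vb by (intro order_trans[OF sum_bounded_above] sum_bounded_above) auto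
    moreover have "(\<Sum>k\<in>UNIV. \<Sum>l\<in>UNIV. \<bar>S k l\<bar>) \<le> p * (p * (\<tau> * real n))"
      unfolding p_def using Sb by (intro order_trans[OF sum_bounded_above] sum_bounded_above) auto
    moreover have "2 * (p * (\<tau> * real n)) + 2 * (p * (p * (\<tau> * real n))) + p * (p * (\<tau> * real n)) = c0 * real n / 2"
    proof -
      have pp: "0 \<le> p * p" by simp
      have den0: "0 < 2 * (2 * p + 3 * p * p)"
        by (intro mult_pos_pos add_pos_nonneg mult_nonneg_nonneg) (use p in auto)
      then have den: "2 * (2 * p + 3 * p * p) \<noteq> 0" by simp
      have "(2 * p + 3 * p * p) * \<tau> = c0 / 2" unfolding tau_eq using den by (simp add: field_simps)
      moreover have "2 * (p * (\<tau> * real n)) + 2 * (p * (p * (\<tau> * real n))) + p * (p * (\<tau> * real n))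
          = ((2 * p + 3 * p * p) * \<tau>) * real n" by (simp add: algebra_simps)
      ultimately show ?thesis by simp
    qed
    ultimately show ?thesis by linarith
  qed
  have lb: "c0 / 2 * real n * (norm v)\<^sup>2 \<le> (\<Sum>j<n. (v \<bullet> zt n \<omega> j)\<^sup>2)" for v
  proof -
    define a where "a = v $ None"
    define w where "w = tl_vec v"
    define ubv where "ubv = (1 / real n) *\<^sub>R (\<Sum>j<n. mm n j)"
    have LBi: "real n * ((a + w \<bullet> ubv)\<^sup>2 + \<sigma>z\<^sup>2 * (norm w)\<^sup>2)
         - (norm v)\<^sup>2 * (2 * (\<Sum>l\<in>UNIV. \<bar>U l\<bar>) + 2 * (\<Sum>k\<in>UNIV. \<Sum>l\<in>UNIV. \<bar>V k l\<bar>) + (\<Sum>k\<in>UNIV. \<Sum>l\<in>UNIV. \<bar>S k l\<bar>))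
         \<le> (\<Sum>j<n. (v \<bullet> zt n \<omega> j)\<^sup>2)"
      using LB[OF n, where v=v and u="mm n" and e="Et n \<omega>" and sq="\<sigma>z\<^sup>2"] by (simp add: a_def w_def ubv_def U_def V_def S_def zt_def)
    have t: "\<bar>w \<bullet> ubv\<bar> \<le> Mb * norm w"
    proof -
      have "\<bar>w \<bullet> ubv\<bar> \<le> norm w * norm ubv" by (rule Cauchy_Schwarz_ineq2)
      also have "\<dots> \<le> norm w * Mb" using mult_left_mono[OF ub[folded ubv_def] norm_ge_zero] .
      finally show ?thesis by (simp add: mult.commute)
    qed
    have "c0 * (a\<^sup>2 + (norm w)\<^sup>2) \<le> (a + w \<bullet> ubv)\<^sup>2 + \<sigma>z\<^sup>2 * (norm w)\<^sup>2"
      unfolding c0_def using sigz Mb by (intro c0_bound[OF t]) auto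
    moreover have "a\<^sup>2 + (norm w)\<^sup>2 = (norm v)\<^sup>2" using norm2_opt[of v] by (simp add: a_def w_def)
    ultimately have A: "real n * (c0 * (norm v)\<^sup>2) \<le> real n * ((a + w \<bullet> ubv)\<^sup>2 + \<sigma>z\<^sup>2 * (norm w)\<^sup>2)"
      by (intro mult_left_mono) auto
    have B: "(norm v)\<^sup>2 * (2 * (\<Sum>l\<in>UNIV. \<bar>U l\<bar>) + 2 * (\<Sum>k\<in>UNIV. \<Sum>l\<in>UNIV. \<bar>V k l\<bar>) + (\<Sum>k\<in>UNIV. \<Sum>l\<in>UNIV. \<bar>S k l\<bar>))
        \<le> (norm v)\<^sup>2 * (c0 * real n / 2)"
      by (rule mult_left_mono[OF err]) simp
    have "c0 / 2 * real n * (norm v)\<^sup>2 = real n * (c0 * (norm v)\<^sup>2) - (norm v)\<^sup>2 * (c0 * real n / 2)"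
      by (simp add: algebra_simps)
    then show ?thesis using A B LBi by linarith
  qed
  define A1 where "A1 = (\<Sum>j<n. et n \<omega> j)\<^sup>2"
  define A2 where "A2 = (\<Sum>k\<in>UNIV. (\<Sum>j<n. et n \<omega> j * (mm n j $ k + Et n \<omega> j $ k))\<^sup>2)"
  define A3 where "A3 = (\<Sum>j<n. \<Sum>k\<in>UNIV. (Et n \<omega> j $ k)\<^sup>2)"
  define A4 where "A4 = (\<Sum>j<n. (1 + 2 * (norm (mm n j))\<^sup>2 + 2 * (\<Sum>k\<in>UNIV. (Et n \<omega> j $ k)\<^sup>2)) * (et n \<omega> j)\<^sup>2)"
  have Req: "Rv n \<omega> = A1 + A2 + A3 + A4" by (simp add: Rv_def A1_def A2_def A3_def A4_def)
  have A0: "0 \<le> A1" "0 \<le> A2" "0 \<le> A3" "0 \<le> A4"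
    unfolding A1_def A2_def A3_def A4_def by (auto intro!: sum_nonneg mult_nonneg_nonneg add_nonneg_nonneg)
  have Kn: "0 \<le> K * real n" using Rg Rv_nonneg[of n \<omega>] by linarith
  have Erow: "(\<Sum>k\<in>UNIV. (Et n \<omega> j $ k)\<^sup>2) \<le> \<rho> / 8 * real n" if j: "j < n" for j
  proof -
    have "(\<Sum>k\<in>UNIV. (Et n \<omega> j $ k)\<^sup>2)\<^sup>2 \<le> Mx n \<omega>"
      unfolding Mx_def using j by (intro member_le_sum) auto
    then have "\<bar>\<Sum>k\<in>UNIV. (Et n \<omega> j $ k)\<^sup>2\<bar> \<le> \<rho> / 8 * real n"
      by (rule sq_lt_imp[OF _ Mg]) (use rho in simp)
    then show ?thesis by simp
  qed
  have zmax: "(norm (zt n \<omega> j))\<^sup>2 \<le> \<rho> * real n" if j: "j < n" for j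
    using zt_norm2[of n \<omega> j] Erow[OF j] mmx j n1 by auto
  have Zs: "(\<Sum>j<n. (norm (zt n \<omega> j))\<^sup>2) \<le> (1 + 2 * Cm + 2 * K) * real n"
  proof -
    have "(\<Sum>j<n. (norm (zt n \<omega> j))\<^sup>2) \<le> (\<Sum>j<n. 1 + 2 * (norm (mm n j))\<^sup>2 + 2 * (\<Sum>k\<in>UNIV. (Et n \<omega> j $ k)\<^sup>2))"
      by (rule sum_mono) (rule zt_norm2)
    also have "\<dots> = real n + 2 * (\<Sum>j<n. (norm (mm n j))\<^sup>2) + 2 * A3"
      by (simp add: A3_def sum.distrib sum_distrib_left)
    also have "\<dots> \<le> (1 + 2 * Cm + 2 * K) * real n"
      using Cm Rg A0 unfolding Req by (simp add: algebra_simps)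
    finally show ?thesis .
  qed
  have Ez: "(norm (\<Sum>j<n. et n \<omega> j *\<^sub>R zt n \<omega> j))\<^sup>2 \<le> K * real n"
  proof -
    have "(norm (\<Sum>j<n. et n \<omega> j *\<^sub>R zt n \<omega> j))\<^sup>2 = A1 + A2"
      by (simp add: norm2_vec sum_option A1_def A2_def zt_def aug_def)
    then show ?thesis using Rg A0 unfolding Req by simp
  qed
  have Ze: "(\<Sum>j<n. (norm (zt n \<omega> j))\<^sup>2 * (et n \<omega> j)\<^sup>2) \<le> K * real n"
  proof -
    have "(\<Sum>j<n. (norm (zt n \<omega> j))\<^sup>2 * (et n \<omega> j)\<^sup>2) \<le> A4"
      unfolding A4_def by (intro sum_mono mult_right_mono zt_norm2) auto
    then show ?thesis using Rg A0 unfolding Req by simp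
  qed
  have c2: "0 < c0 / 2" using c0 by simp
  have rho2: "\<rho> \<le> c0 / 2 / 2" using rho by simp
  note F = FIN[where lam="lam n" and c="c0/2" and n=n and z="zt n \<omega>" and \<rho>=\<rho> and s="sv n" and B=B
      and Kz="1 + 2 * Cm + 2 * K" and e="et n \<omega>" and K=K,
      OF lam_nonneg c2 n lb zmax less_imp_le[OF rho(1)] rho2 Bs Zs Ez Ze]
  show "(\<Sum>i<n. (yh n \<omega> i)\<^sup>2) \<le> (2 * B * (1 + 2 * Cm + 2 * K) + 2 * K) / (c0 / 2)"
    using F(1) by (simp add: yh_def)
  show "(\<Sum>i<n. (yt n \<omega> i - yh n \<omega> i)\<^sup>2)
       \<le> 2 * (2 * \<rho> / (c0 / 2))\<^sup>2 * ((2 * B * (1 + 2 * Cm + 2 * K) + 2 * K) / (c0 / 2))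
         + 4 * (2 * \<rho> / (c0 / 2))\<^sup>2 * B + 8 * (2 * \<rho> / (c0 / 2)) * K / (c0 / 2)"
    using F(2) by (simp add: yh_def yt_def)
qed

end

lemma ev_small:
  assumes "0 < e"
  shows "eventually (\<lambda>n. C / real n < e) sequentially"
  using order_tendstoD(2)[OF lim_const_over_n[of C] assms] by simp

context msetting begin

lemma outer_bad:
  assumes "\<And>\<omega>. \<omega> \<in> space M \<Longrightarrow> P \<omega> \<Longrightarrow> \<omega> \<in> A1 \<union> A2 \<union> A3"
    and "A1 \<in> sets M" "A2 \<in> sets M" "A3 \<in> sets M"
  shows "outer_prob M {\<omega>\<in>space M. P \<omega>} \<le> prob A1 + prob A2 + prob A3"
proof -
  have "outer_prob M {\<omega>\<in>space M. P \<omega>} \<le> prob (A1 \<union> A2 \<union> A3)"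
    by (rule outer_prob_le) (use assms in auto)
  also have "\<dots> \<le> prob (A1 \<union> A2) + prob A3" by (rule measure_Un_le) (use assms in auto)
  also have "prob (A1 \<union> A2) \<le> prob A1 + prob A2" by (rule measure_Un_le) (use assms in auto)
  finally show ?thesis by simp
qed

lemma main_res:
  "small_oP M (\<lambda>n \<omega>. sqrt (\<Sum>i<n. (yt n \<omega> i - yh n \<omega> i)\<^sup>2))
   \<and> big_OP M (\<lambda>n \<omega>. sqrt (\<Sum>i<n. (yt n \<omega> i)\<^sup>2))
   \<and> big_OP M (\<lambda>n \<omega>. sqrt (\<Sum>i<n. (yh n \<omega> i)\<^sup>2))"
proof -
  obtain Cx where Cx: "Cx \<ge> 0" and ev1: "eventually (\<lambda>n. (\<Sum>i<n. (norm (X n i))\<^sup>2) \<le> Cx * real n) sequentially"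
    using D1 by blast
  obtain B0 where ev3: "eventually (\<lambda>n. (\<Sum>i<n. (sv n i)\<^sup>2) \<le> B0) sequentially"
    using D3 by (auto simp: sv_def)
  define B where "B = \<bar>B0\<bar>"
  have B: "0 \<le> B" by (simp add: B_def)
  define Cm where "Cm = gG\<^sup>2 * Cx"
  have Cm: "0 \<le> Cm" using Cx by (simp add: Cm_def)
  define Mb where "Mb = gG * (norm \<Theta> + 1)"
  have Mb: "0 \<le> Mb" using gG_nonneg by (simp add: Mb_def)
  define p where "p = real CARD('p)"
  have p: "0 < p" by (simp add: p_def)
  define c0 where "c0 = min (\<sigma>z\<^sup>2 / (4 * (Mb\<^sup>2 + \<sigma>z\<^sup>2))) (\<sigma>z\<^sup>2 / 2)"
  have c0: "0 < c0" unfolding c0_def using sigz Mb by (simp add: add_nonneg_pos)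
  define \<tau> where "\<tau> = c0 / (2 * (2 * p + 3 * p * p))"
  have tau: "0 < \<tau>" unfolding \<tau>_def using c0 p
    by (intro divide_pos_pos mult_pos_pos add_pos_nonneg mult_nonneg_nonneg) auto
  define CQ where "CQ = p * \<sigma>z\<^sup>2 + p * \<sigma>z\<^sup>2 * Cm + 14 * p * p * \<sigma>z ^ 4"
  define CR where "CR = 3 * \<sigma>\<^sup>2 + p * \<sigma>z\<^sup>2 + 12 * p * (\<sigma> ^ 4 + \<sigma>z ^ 4) + 4 * \<sigma>\<^sup>2 * Cm"
  have CR: "0 < CR" unfolding CR_def using sig p Cm
    by (intro add_pos_nonneg mult_nonneg_nonneg) auto
  define W where "W K = (2 * B * (1 + 2 * Cm + 2 * K) + 2 * K) / (c0 / 2)" for K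
  define bd where "bd \<rho> K = 2 * (2 * \<rho> / (c0 / 2))\<^sup>2 * W K + 4 * (2 * \<rho> / (c0 / 2))\<^sup>2 * B + 8 * (2 * \<rho> / (c0 / 2)) * K / (c0 / 2)" for \<rho> K
  define Bq where "Bq n = {\<omega>\<in>space M. (\<tau> * real n)\<^sup>2 \<le> Qv n \<omega>}" for n
  define Bm where "Bm \<rho> n = {\<omega>\<in>space M. (\<rho> / 8 * real n)\<^sup>2 \<le> Mx n \<omega>}" for \<rho> n
  define Br where "Br K n = {\<omega>\<in>space M. K * real n \<le> Rv n \<omega>}" for K n
  have Bsets: "Bq n \<in> sets M" "Bm \<rho> n \<in> sets M" "Br K n \<in> sets M" for n \<rho> K
    unfolding Bq_def Bm_def Br_def by measurable
  have ev_m: "eventually (\<lambda>n. (\<Sum>j<n. (norm (mm n j))\<^sup>2) \<le> Cm * real n) sequentially"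
    using ev1
  proof eventually_elim
    case (elim n)
    have "(\<Sum>j<n. (norm (mm n j))\<^sup>2) \<le> (\<Sum>j<n. gG\<^sup>2 * (norm (X n j))\<^sup>2)"
      by (rule sum_mono) (rule mm_bound2)
    also have "\<dots> = gG\<^sup>2 * (\<Sum>j<n. (norm (X n j))\<^sup>2)" by (simp add: sum_distrib_left)
    also have "\<dots> \<le> gG\<^sup>2 * (Cx * real n)" using elim by (simp add: mult_left_mono)
    finally show ?case by (simp add: Cm_def mult.assoc)
  qed
  have ev_ub: "eventually (\<lambda>n. norm ((1 / real n) *\<^sub>R (\<Sum>j<n. mm n j)) \<le> Mb) sequentially"
    using D2
  proof eventually_elim
    case (elim n)
    have "(1 / real n) *\<^sub>R (\<Sum>j<n. mm n j) = ((1 / real n) *\<^sub>R (\<Sum>j<n. X n j)) v* \<Gamma>"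
      by (simp add: mm_def vm_sum vm_scale)
    then have "norm ((1 / real n) *\<^sub>R (\<Sum>j<n. mm n j)) = norm (((1 / real n) *\<^sub>R (\<Sum>j<n. X n j)) v* \<Gamma>)"
      by simp
    also have "\<dots> \<le> gG * norm ((1 / real n) *\<^sub>R (\<Sum>j<n. X n j))"
      unfolding gG_def by (rule vm_bound)
    also have "\<dots> \<le> Mb" unfolding Mb_def using elim gG_nonneg by (rule mult_left_mono)
    finally show ?case .
  qed
  have master: "eventually (\<lambda>n. 0 < n \<and> prob (Bq n) + prob (Bm \<rho> n) + prob (Br K n) < r + CR / K
      \<and> (\<forall>\<omega>\<in>space M. \<omega> \<notin> Bq n \<union> Bm \<rho> n \<union> Br K n \<longrightarrow>
           (\<Sum>i<n. (yh n \<omega> i)\<^sup>2) \<le> W K \<and> (\<Sum>i<n. (yt n \<omega> i - yh n \<omega> i)\<^sup>2) \<le> bd \<rho> K)) sequentially"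
    if r: "0 < r" and K: "0 < K" and rho: "0 < \<rho>" "\<rho> \<le> c0 / 4" for r K \<rho>
  proof -
    define r' where "r' = \<rho> / (8 * (gG\<^sup>2 + 1))"
    have r': "0 < r'" unfolding r'_def using rho by (simp add: add_nonneg_pos)
    have ev4: "eventually (\<lambda>n. \<forall>j<n. (norm (mm n j))\<^sup>2 \<le> \<rho> / 8 * real n) sequentially"
      using D4[OF r']
    proof eventually_elim
      case (elim n)
      show ?case
      proof (intro allI impI)
        fix j assume j: "j < n"
        have "(norm (mm n j))\<^sup>2 \<le> gG\<^sup>2 * (r' * real n)"
          using mm_bound2[of n j] mult_left_mono[OF elim[rule_format, OF j], of "gG\<^sup>2"] by simp
        also have "\<dots> \<le> \<rho> / 8 * real n"
        proof -
          have e: "gG\<^sup>2 * r' = \<rho> / 8 * (gG\<^sup>2 / (gG\<^sup>2 + 1))" unfolding r'_def by simp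
          have pos: "0 < gG\<^sup>2 + 1" by (simp add: add_nonneg_pos)
          have "gG\<^sup>2 / (gG\<^sup>2 + 1) \<le> 1" using divide_le_eq_1_pos[OF pos] by simp
          then have "gG\<^sup>2 * r' \<le> \<rho> / 8" unfolding e using rho
            by (metis mult.right_neutral mult_left_mono less_eq_real_def zero_less_divide_iff zero_less_numeral)
          then show ?thesis using mult_right_mono[of "gG\<^sup>2 * r'" "\<rho> / 8" "real n"] by (simp add: mult.assoc)
        qed
        finally show "(norm (mm n j))\<^sup>2 \<le> \<rho> / 8 * real n" .
      qed
    qed
    have ev5: "eventually (\<lambda>n. 4 / \<rho> / real n < 1) sequentially" by (rule ev_small) simp
    have ev6: "eventually (\<lambda>n. CQ / \<tau>\<^sup>2 / real n < r / 2) sequentially" by (rule ev_small) (use r in simp)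
    have ev7: "eventually (\<lambda>n. 3 * p * p * \<sigma>z ^ 4 / (\<rho> / 8)\<^sup>2 / real n < r / 2) sequentially"
      by (rule ev_small) (use r in simp)
    show ?thesis
      using ev_m ev_ub ev3 ev4 ev5 ev6 ev7 eventually_gt_at_top[of 0]
    proof eventually_elim
      case (elim n)
      have n: "0 < n" using elim by simp
      have rn: "0 < real n" using n by simp
      have n1: "1 \<le> \<rho> / 4 * real n"
      proof -
        have "4 / \<rho> < 1 * real n" using pos_divide_less_eq[OF rn, of "4 / \<rho>" 1] elim(5) by simp
        then show ?thesis using rho by (simp add: field_simps)
      qed
      have pq: "prob (Bq n) \<le> CQ / \<tau>\<^sup>2 / real n"
      proof -
        have "expectation (Qv n) \<le> real n * CQ"
        proof -
          have "expectation (Qv n) \<le> real n * real CARD('p) * \<sigma>z\<^sup>2 + real CARD('p) * \<sigma>z\<^sup>2 * (\<Sum>j<n. (norm (mm n j))\<^sup>2)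
              + 14 * real n * real CARD('p) * real CARD('p) * \<sigma>z ^ 4" using Qv_int_exp by blast
          also have "\<dots> \<le> real n * p * \<sigma>z\<^sup>2 + p * \<sigma>z\<^sup>2 * (Cm * real n) + 14 * real n * p * p * \<sigma>z ^ 4"
            unfolding p_def using elim(1) by (intro add_mono mult_left_mono order_refl) auto
          also have "\<dots> = real n * CQ" by (simp add: CQ_def algebra_simps)
          finally show ?thesis .
        qed
        then have "prob (Bq n) \<le> real n * CQ / (\<tau> * real n)\<^sup>2"
          unfolding Bq_def using Qv_int_exp Qv_nonneg tau rn by (intro prob_ge) auto
        also have "\<dots> = CQ / \<tau>\<^sup>2 / real n" using rn tau by (simp add: field_simps power2_eq_square)
        finally show ?thesis .
      qed
      have pm: "prob (Bm \<rho> n) \<le> 3 * p * p * \<sigma>z ^ 4 / (\<rho> / 8)\<^sup>2 / real n"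
      proof -
        have "prob (Bm \<rho> n) \<le> real n * p * p * (3 * \<sigma>z ^ 4) / (\<rho> / 8 * real n)\<^sup>2"
          unfolding Bm_def p_def using Mx_int_exp Mx_nonneg rho rn by (intro prob_ge) auto
        also have "\<dots> = 3 * p * p * \<sigma>z ^ 4 / (\<rho> / 8)\<^sup>2 / real n" using rn rho by (simp add: field_simps power2_eq_square)
        finally show ?thesis .
      qed
      have pr: "prob (Br K n) \<le> CR / K"
      proof -
        have "expectation (Rv n) \<le> real n * CR"
        proof -
          have "expectation (Rv n) \<le> real n * (3 * \<sigma>\<^sup>2 + real CARD('p) * \<sigma>z\<^sup>2 + 12 * real CARD('p) * (\<sigma> ^ 4 + \<sigma>z ^ 4))
              + 4 * \<sigma>\<^sup>2 * (\<Sum>j<n. (norm (mm n j))\<^sup>2)" using Rv_int_exp by blast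
          also have "\<dots> \<le> real n * (3 * \<sigma>\<^sup>2 + p * \<sigma>z\<^sup>2 + 12 * p * (\<sigma> ^ 4 + \<sigma>z ^ 4)) + 4 * \<sigma>\<^sup>2 * (Cm * real n)"
            unfolding p_def using elim(1) by (intro add_mono mult_left_mono order_refl) auto
          also have "\<dots> = real n * CR" by (simp add: CR_def algebra_simps)
          finally show ?thesis .
        qed
        then have "prob (Br K n) \<le> real n * CR / (K * real n)"
          unfolding Br_def using Rv_int_exp Rv_nonneg K rn by (intro prob_ge) auto
        also have "\<dots> = CR / K" using rn by simp
        finally show ?thesis .
      qed
      have P: "prob (Bq n) + prob (Bm \<rho> n) + prob (Br K n) < r + CR / K"
        using pq pm pr elim(6) elim(7) by linarith
      have G: "(\<Sum>i<n. (yh n \<omega> i)\<^sup>2) \<le> W K \<and> (\<Sum>i<n. (yt n \<omega> i - yh n \<omega> i)\<^sup>2) \<le> bd \<rho> K"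
        if \<omega>: "\<omega> \<in> space M" "\<omega> \<notin> Bq n \<union> Bm \<rho> n \<union> Br K n" for \<omega>
      proof -
        have Qg: "Qv n \<omega> < (\<tau> * real n)\<^sup>2" using \<omega> by (auto simp: Bq_def)
        have Mg: "Mx n \<omega> < (\<rho> / 8 * real n)\<^sup>2" using \<omega> by (auto simp: Bm_def)
        have Rg: "Rv n \<omega> < K * real n" using \<omega> by (auto simp: Br_def)
        have rho': "\<rho> \<le> min (\<sigma>z\<^sup>2 / (4 * (Mb\<^sup>2 + \<sigma>z\<^sup>2))) (\<sigma>z\<^sup>2 / 2) / 4" using rho by (simp add: c0_def)
        have Qg': "Qv n \<omega> < (min (\<sigma>z\<^sup>2 / (4 * (Mb\<^sup>2 + \<sigma>z\<^sup>2))) (\<sigma>z\<^sup>2 / 2)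
             / (2 * (2 * real CARD('p) + 3 * real CARD('p) * real CARD('p))) * real n)\<^sup>2"
          using Qg by (simp add: \<tau>_def c0_def p_def)
        note gd = good[where n=n and Mb=Mb and Cm=Cm and B=B and K=K and \<rho>=\<rho> and \<omega>=\<omega>,
            OF n Mb elim(2) elim(1) order_trans[OF elim(3)] elim(4) n1 rho(1) rho' Qg' Mg Rg]
        show ?thesis using gd by (simp add: W_def bd_def c0_def B_def)
      qed
      show ?case using n P G by blast
    qed
  qed

  have Wnn: "0 \<le> W K" if "0 \<le> K" for K
    unfolding W_def using B Cm c0 that by (intro divide_nonneg_pos add_nonneg_nonneg mult_nonneg_nonneg) auto
  have CRK: "CR / (2 * CR / a + 1) < a / 2" if a: "0 < a" for a
  proof -
    have K: "0 < 2 * CR / a + 1" using CR a by (simp add: add_pos_pos)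
    have "a * (2 * CR / a + 1) = 2 * CR + a" using a by (simp add: field_simps)
    then have "2 * CR < a * (2 * CR / a + 1)" using a by simp
    then show ?thesis using K by (simp add: pos_divide_less_eq field_simps)
  qed
  have Kpos: "0 < 2 * CR / a + 1" if "0 < a" for a using CR that by (simp add: add_pos_pos)
  have sq_nn: "0 \<le> (\<Sum>i<n. (f i)\<^sup>2)" for f :: "nat \<Rightarrow> real" and n by (simp add: sum_nonneg)
  have part1: "small_oP M (\<lambda>n \<omega>. sqrt (\<Sum>i<n. (yt n \<omega> i - yh n \<omega> i)\<^sup>2))"
    unfolding small_oP_def
  proof (intro allI impI)
    fix \<delta> :: real assume \<delta>: "\<delta> > 0"
    show "(\<lambda>n. outer_prob M {\<omega>\<in>space M. \<bar>sqrt (\<Sum>i<n. (yt n \<omega> i - yh n \<omega> i)\<^sup>2)\<bar> > \<delta>}) \<longlonglongrightarrow> 0"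
    proof (rule order_tendstoI)
      fix a :: real assume "a < 0"
      then show "eventually (\<lambda>n. a < outer_prob M {\<omega>\<in>space M. \<bar>sqrt (\<Sum>i<n. (yt n \<omega> i - yh n \<omega> i)\<^sup>2)\<bar> > \<delta>}) sequentially"
        using outer_prob_nonneg by (intro always_eventually allI) (rule less_le_trans)
    next
      fix a :: real assume a: "0 < a"
      define K where "K = 2 * CR / a + 1"
      have K: "0 < K" unfolding K_def using Kpos[OF a] .
      have CRK': "CR / K < a / 2" unfolding K_def using CRK[OF a] .
      define Xc where "Xc = 2 * W K + 4 * B + 8 * K / (c0 / 2)"
      have Xc: "0 \<le> Xc" unfolding Xc_def using Wnn[of K] K B c0 by simp
      define \<gamma> where "\<gamma> = min 1 (\<delta>\<^sup>2 / (2 * Xc + 1))"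
      have g0: "0 < \<gamma>" unfolding \<gamma>_def using \<delta> Xc by simp
      have g1: "\<gamma> \<le> 1" unfolding \<gamma>_def by simp
      define \<rho> where "\<rho> = \<gamma> * c0 / 4"
      have rho: "0 < \<rho>" "\<rho> \<le> c0 / 4" unfolding \<rho>_def using g0 g1 c0 by auto
      have bdlt: "bd \<rho> K < \<delta>\<^sup>2"
      proof -
        have e: "2 * \<rho> / (c0 / 2) = \<gamma>" unfolding \<rho>_def using c0 by simp
        have gg: "\<gamma>\<^sup>2 \<le> \<gamma>" using g0 g1 by (simp add: power2_eq_square mult_left_le)
        have "bd \<rho> K = 2 * \<gamma>\<^sup>2 * W K + 4 * \<gamma>\<^sup>2 * B + 8 * \<gamma> * K / (c0 / 2)"
          unfolding bd_def e by simp
        also have "\<dots> \<le> 2 * \<gamma> * W K + 4 * \<gamma> * B + 8 * \<gamma> * K / (c0 / 2)"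
          using mult_right_mono[OF gg Wnn[of K]] mult_right_mono[OF gg B] K by simp
        also have "\<dots> = \<gamma> * Xc" by (simp add: Xc_def algebra_simps)
        also have "\<dots> \<le> \<delta>\<^sup>2 / (2 * Xc + 1) * Xc"
          using Xc by (intro mult_right_mono) (auto simp: \<gamma>_def)
        also have "\<dots> < \<delta>\<^sup>2"
        proof -
          have "Xc < 2 * Xc + 1" using Xc by simp
          then have "Xc / (2 * Xc + 1) < 1" using Xc by simp
          then have "\<delta>\<^sup>2 * (Xc / (2 * Xc + 1)) < \<delta>\<^sup>2 * 1" using \<delta> by (intro mult_strict_left_mono) auto
          then show ?thesis by simp
        qed
        finally show ?thesis .
      qed
      have half: "0 < a / 2" using a by simp
      show "eventually (\<lambda>n. outer_prob M {\<omega>\<in>space M. \<bar>sqrt (\<Sum>i<n. (yt n \<omega> i - yh n \<omega> i)\<^sup>2)\<bar> > \<delta>} < a) sequentially"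
        using master[OF half K rho]
      proof eventually_elim
        case (elim n)
        have "outer_prob M {\<omega>\<in>space M. \<bar>sqrt (\<Sum>i<n. (yt n \<omega> i - yh n \<omega> i)\<^sup>2)\<bar> > \<delta>}
            \<le> prob (Bq n) + prob (Bm \<rho> n) + prob (Br K n)"
        proof (rule outer_bad[OF _ Bsets])
          fix \<omega> assume \<omega>: "\<omega> \<in> space M" and big: "\<bar>sqrt (\<Sum>i<n. (yt n \<omega> i - yh n \<omega> i)\<^sup>2)\<bar> > \<delta>"
          show "\<omega> \<in> Bq n \<union> Bm \<rho> n \<union> Br K n"
          proof (rule ccontr)
            assume "\<omega> \<notin> Bq n \<union> Bm \<rho> n \<union> Br K n"
            then have "(\<Sum>i<n. (yt n \<omega> i - yh n \<omega> i)\<^sup>2) \<le> bd \<rho> K" using elim \<omega> by blast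
            then have "(\<Sum>i<n. (yt n \<omega> i - yh n \<omega> i)\<^sup>2) < \<delta>\<^sup>2" using bdlt by simp
            then have "sqrt (\<Sum>i<n. (yt n \<omega> i - yh n \<omega> i)\<^sup>2) < sqrt (\<delta>\<^sup>2)" by (rule real_sqrt_less_mono)
            then show False using big \<delta> by (simp add: abs_of_nonneg sum_nonneg)
          qed
        qed
        then show ?case using elim CRK' by linarith
      qed
    qed
  qed
  have part23: "big_OP M (\<lambda>n \<omega>. sqrt (\<Sum>i<n. (yt n \<omega> i)\<^sup>2)) \<and> big_OP M (\<lambda>n \<omega>. sqrt (\<Sum>i<n. (yh n \<omega> i)\<^sup>2))"
  proof -
    have gen: "\<exists>K' N. \<forall>n\<ge>N. outer_prob M {\<omega>\<in>space M. \<bar>Y n \<omega>\<bar> > K'} < \<eta>"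
      if \<eta>: "0 < \<eta>" and YB: "\<And>K \<rho> n \<omega>. (\<Sum>i<n. (yh n \<omega> i)\<^sup>2) \<le> W K \<Longrightarrow> (\<Sum>i<n. (yt n \<omega> i - yh n \<omega> i)\<^sup>2) \<le> bd \<rho> K
          \<Longrightarrow> \<bar>Y n \<omega>\<bar> \<le> sqrt (2 * W K + 2 * bd \<rho> K)"
      for \<eta> and Y :: "nat \<Rightarrow> 'w \<Rightarrow> real"
    proof -
      define K where "K = 2 * CR / \<eta> + 1"
      have K: "0 < K" unfolding K_def using Kpos[OF \<eta>] .
      have CRK': "CR / K < \<eta> / 2" unfolding K_def using CRK[OF \<eta>] .
      define \<rho> where "\<rho> = c0 / 4"
      have rho: "0 < \<rho>" "\<rho> \<le> c0 / 4" unfolding \<rho>_def using c0 by auto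
      have half: "0 < \<eta> / 2" using \<eta> by simp
      obtain N where N: "\<And>n. n \<ge> N \<Longrightarrow> 0 < n \<and> prob (Bq n) + prob (Bm \<rho> n) + prob (Br K n) < \<eta> / 2 + CR / K
      \<and> (\<forall>\<omega>\<in>space M. \<omega> \<notin> Bq n \<union> Bm \<rho> n \<union> Br K n \<longrightarrow>
           (\<Sum>i<n. (yh n \<omega> i)\<^sup>2) \<le> W K \<and> (\<Sum>i<n. (yt n \<omega> i - yh n \<omega> i)\<^sup>2) \<le> bd \<rho> K)"
        using master[OF half K rho] unfolding eventually_sequentially by blast
      define K' where "K' = sqrt (2 * W K + 2 * bd \<rho> K)"
      have "\<forall>n\<ge>N. outer_prob M {\<omega>\<in>space M. \<bar>Y n \<omega>\<bar> > K'} < \<eta>"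
      proof (intro allI impI)
        fix n assume n: "n \<ge> N"
        have "outer_prob M {\<omega>\<in>space M. \<bar>Y n \<omega>\<bar> > K'} \<le> prob (Bq n) + prob (Bm \<rho> n) + prob (Br K n)"
        proof (rule outer_bad[OF _ Bsets])
          fix \<omega> assume \<omega>: "\<omega> \<in> space M" and big: "\<bar>Y n \<omega>\<bar> > K'"
          show "\<omega> \<in> Bq n \<union> Bm \<rho> n \<union> Br K n"
          proof (rule ccontr)
            assume "\<omega> \<notin> Bq n \<union> Bm \<rho> n \<union> Br K n"
            then have "(\<Sum>i<n. (yh n \<omega> i)\<^sup>2) \<le> W K" "(\<Sum>i<n. (yt n \<omega> i - yh n \<omega> i)\<^sup>2) \<le> bd \<rho> K"
              using N[OF n] \<omega> by blast+
            then have "\<bar>Y n \<omega>\<bar> \<le> K'" unfolding K'_def by (rule YB)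
            then show False using big by simp
          qed
        qed
        then show "outer_prob M {\<omega>\<in>space M. \<bar>Y n \<omega>\<bar> > K'} < \<eta>" using N[OF n] CRK' by linarith
      qed
      then show ?thesis by blast
    qed
    have yt: "big_OP M (\<lambda>n \<omega>. sqrt (\<Sum>i<n. (yt n \<omega> i)\<^sup>2))"
      unfolding big_OP_def
    proof (intro allI impI)
      fix \<eta> :: real assume \<eta>: "0 < \<eta>"
      show "\<exists>K N. \<forall>n\<ge>N. outer_prob M {\<omega>\<in>space M. \<bar>sqrt (\<Sum>i<n. (yt n \<omega> i)\<^sup>2)\<bar> > K} < \<eta>"
      proof (rule gen[OF \<eta>])
        fix K \<rho> n \<omega>
        assume h1: "(\<Sum>i<n. (yh n \<omega> i)\<^sup>2) \<le> W K" and h2: "(\<Sum>i<n. (yt n \<omega> i - yh n \<omega> i)\<^sup>2) \<le> bd \<rho> K"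
        have "(\<Sum>i<n. (yt n \<omega> i)\<^sup>2) \<le> (\<Sum>i<n. 2 * (yh n \<omega> i)\<^sup>2 + 2 * (yt n \<omega> i - yh n \<omega> i)\<^sup>2)"
        proof (rule sum_mono)
          fix i
          have "(yh n \<omega> i + (yt n \<omega> i - yh n \<omega> i))\<^sup>2 \<le> 2 * (yh n \<omega> i)\<^sup>2 + 2 * (yt n \<omega> i - yh n \<omega> i)\<^sup>2"
            by (rule sq_sum_le')
          then show "(yt n \<omega> i)\<^sup>2 \<le> 2 * (yh n \<omega> i)\<^sup>2 + 2 * (yt n \<omega> i - yh n \<omega> i)\<^sup>2" by simp
        qed
        also have "\<dots> = 2 * (\<Sum>i<n. (yh n \<omega> i)\<^sup>2) + 2 * (\<Sum>i<n. (yt n \<omega> i - yh n \<omega> i)\<^sup>2)"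
          by (simp add: sum.distrib sum_distrib_left)
        also have "\<dots> \<le> 2 * W K + 2 * bd \<rho> K" using h1 h2 by simp
        finally show "\<bar>sqrt (\<Sum>i<n. (yt n \<omega> i)\<^sup>2)\<bar> \<le> sqrt (2 * W K + 2 * bd \<rho> K)"
          using sq_nn by (simp add: real_sqrt_le_mono)
      qed
    qed
    have yh: "big_OP M (\<lambda>n \<omega>. sqrt (\<Sum>i<n. (yh n \<omega> i)\<^sup>2))"
      unfolding big_OP_def
    proof (intro allI impI)
      fix \<eta> :: real assume \<eta>: "0 < \<eta>"
      show "\<exists>K N. \<forall>n\<ge>N. outer_prob M {\<omega>\<in>space M. \<bar>sqrt (\<Sum>i<n. (yh n \<omega> i)\<^sup>2)\<bar> > K} < \<eta>"
      proof (rule gen[OF \<eta>])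
        fix K \<rho> n \<omega>
        assume h1: "(\<Sum>i<n. (yh n \<omega> i)\<^sup>2) \<le> W K" and h2: "(\<Sum>i<n. (yt n \<omega> i - yh n \<omega> i)\<^sup>2) \<le> bd \<rho> K"
        have "0 \<le> (\<Sum>i<n. (yt n \<omega> i - yh n \<omega> i)\<^sup>2)" by (rule sq_nn)
        then have "(\<Sum>i<n. (yh n \<omega> i)\<^sup>2) \<le> 2 * W K + 2 * bd \<rho> K" using h1 h2 sq_nn[of "yh n \<omega>" n] by linarith
        then show "\<bar>sqrt (\<Sum>i<n. (yh n \<omega> i)\<^sup>2)\<bar> \<le> sqrt (2 * W K + 2 * bd \<rho> K)"
          using sq_nn by (simp add: real_sqrt_le_mono)
      qed
    qed
    show ?thesis using yt yh by blast
  qed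
  show ?thesis using part1 part23 by blast
qed

end

theorem lemma9:
  fixes M :: "'w measure"
    and X :: "nat \<Rightarrow> nat \<Rightarrow> real^'e"
    and \<Gamma> :: "real^'p^'e"
    and \<sigma> \<sigma>z :: real
    and lam :: "nat \<Rightarrow> real"
    and \<beta>0 :: "nat \<Rightarrow> real^'e"
    and E :: "nat \<Rightarrow> 'w \<Rightarrow> nat \<Rightarrow> real^'p"
    and \<epsilon> :: "nat \<Rightarrow> 'w \<Rightarrow> nat \<Rightarrow> real"
    and \<kappa> :: real and \<alpha>0 :: "real^'e" and \<Sigma> :: "real^'e^'e" and \<Theta> :: "real^'e"
  assumes prob: "prob_space M"
    and sig: "\<sigma> > 0" and sigz: "\<sigma>z > 0"
    and lam_nonneg: "\<And>n. lam n \<ge> 0"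
    and E_normal: "\<And>n i j. i < n \<Longrightarrow>
          distributed M lborel (\<lambda>\<omega>. E n \<omega> i $ j) (normal_density 0 \<sigma>z)"
    and eps_normal: "\<And>n i. i < n \<Longrightarrow>
          distributed M lborel (\<lambda>\<omega>. \<epsilon> n \<omega> i) (normal_density 0 \<sigma>)"
    and indep: "\<And>n. prob_space.indep_vars M (\<lambda>_. borel)
          (\<lambda>k \<omega>. case k of Inl (i, j) \<Rightarrow> E n \<omega> i $ j | Inr i \<Rightarrow> \<epsilon> n \<omega> i)
          (({..<n} \<times> UNIV) <+> {..<n})"
    and kappa: "(\<lambda>n. lam n / real n) \<longlonglongrightarrow> \<kappa>" and kappa_nonneg: "\<kappa> \<ge> 0"
    and alpha: "(\<lambda>n. sqrt (real n) *\<^sub>R \<beta>0 n) \<longlonglongrightarrow> \<alpha>0"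
    and Sigma: "(\<lambda>n. (1 / real n) *\<^sub>R (\<Sum>i<n. outerp (X n i))) \<longlonglongrightarrow> \<Sigma>"
    and Sigma_pd: "posdef \<Sigma>"
    and Theta: "(\<lambda>n. (1 / real n) *\<^sub>R (\<Sum>i<n. X n i)) \<longlonglongrightarrow> \<Theta>"
    and maxrow: "(\<lambda>n. (MAX i\<in>{..<n}. norm (X n i)) / real n powr (1/3)) \<longlonglongrightarrow> 0"
  defines "ytil \<equiv> \<lambda>n \<omega> i. aug (X n i v* \<Gamma> + E n \<omega> i) \<bullet>
            ridge_coef (lam n) (\<lambda>j. aug (X n j v* \<Gamma> + E n \<omega> j)) (\<lambda>j. X n j \<bullet> \<beta>0 n + \<epsilon> n \<omega> j) ({..<n} - {i})"
    and "yprime \<equiv> \<lambda>n \<omega> i. aug (X n i v* \<Gamma> + E n \<omega> i) \<bullet>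
            ridge_coef (lam n) (\<lambda>j. aug (X n j v* \<Gamma> + E n \<omega> j)) (\<lambda>j. X n j \<bullet> \<beta>0 n) {..<n}
          + aug (X n i v* \<Gamma> + E n \<omega> i) \<bullet> ridge_coef (lam n) (\<lambda>j. aug (X n j v* \<Gamma> + E n \<omega> j)) (\<epsilon> n \<omega>) {..<n}"
  shows "small_oP M (\<lambda>n \<omega>. sqrt (\<Sum>i<n. (ytil n \<omega> i - yprime n \<omega> i)\<^sup>2))
       \<and> big_OP M (\<lambda>n \<omega>. sqrt (\<Sum>i<n. (ytil n \<omega> i)\<^sup>2))
       \<and> big_OP M (\<lambda>n \<omega>. sqrt (\<Sum>i<n. (yprime n \<omega> i)\<^sup>2))"
proof -
  have G: "gset M E \<epsilon> \<sigma> \<sigma>z"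
    by (rule gset.intro[OF prob]) (simp add: gset_axioms_def sig sigz E_normal eps_normal indep)
  have MS: "msetting M E \<epsilon> \<sigma> \<sigma>z X lam \<beta>0 \<alpha>0 \<Sigma> \<Theta>"
    by (rule msetting.intro[OF G]) (simp add: msetting_axioms_def lam_nonneg alpha Sigma Theta maxrow)
  interpret msetting M E \<epsilon> \<sigma> \<sigma>z X \<Gamma> lam \<beta>0 \<alpha>0 \<Sigma> \<Theta> by (rule MS)
  have yt_eq: "ytil n \<omega> i = yt n \<omega> i" if "i < n" for n \<omega> i
    unfolding assms(15) using ytil_eq[OF that] by simp
  have yh_eq: "yprime n \<omega> i = yh n \<omega> i" if "i < n" for n \<omega> i
    unfolding assms(16) using yprime_eq[OF that] by simp
  have e1: "(\<lambda>n \<omega>. sqrt (\<Sum>i<n. (ytil n \<omega> i - yprime n \<omega> i)\<^sup>2)) = (\<lambda>n \<omega>. sqrt (\<Sum>i<n. (yt n \<omega> i - yh n \<omega> i)\<^sup>2))"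
    by (intro ext arg_cong[where f=sqrt] sum.cong refl) (simp add: yt_eq yh_eq)
  have e2: "(\<lambda>n \<omega>. sqrt (\<Sum>i<n. (ytil n \<omega> i)\<^sup>2)) = (\<lambda>n \<omega>. sqrt (\<Sum>i<n. (yt n \<omega> i)\<^sup>2))"
    by (intro ext arg_cong[where f=sqrt] sum.cong refl) (simp add: yt_eq)
  have e3: "(\<lambda>n \<omega>. sqrt (\<Sum>i<n. (yprime n \<omega> i)\<^sup>2)) = (\<lambda>n \<omega>. sqrt (\<Sum>i<n. (yh n \<omega> i)\<^sup>2))"
    by (intro ext arg_cong[where f=sqrt] sum.cong refl) (simp add: yh_eq)
  show ?thesis unfolding e1 e2 e3 by (rule main_res)
qed

end
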